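(* Let $\mathbf{k}$ be a commutative ring, $n\ge0$, $\mathcal{A}=\mathbf{k}[S_n]$. Let $\mathbf{a}=\sum_{\alpha\in\operatorname{Comp}_n}\lambda_\alpha\mathbf{B}_\alpha$ with $\lambda_\alpha\in\mathbf{k}$. Then the $\mathbf{k}$-linear map $\mathcal{A}\to\mathcal{A},\ \mathbf{x}\mapsto\mathbf{a}\mathbf{x}$ is represented, with respect to the basis $\{\mathbf{B}_{\operatorname{LRM}'(w)}\,w\mid w\in S_n\}$ of $\mathcal{A}$ (suitably ordered), by a triangular matrix, whose diagonal entries (and thus the eigenvalues of this map, listed with algebraic multiplicities) are the numbers $\sum_{\alpha\in\operatorname{Comp}_n}\lambda_\alpha\,\eta_{\operatorname{cLRM}'(w)}(\alpha)$ as $w$ ranges over $S_n$.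
   Context: $S_n$ is the symmetric group on $[n]=\{1,\dots,n\}$, with product $(uw)(i)=u(w(i))$. $\operatorname{Des}(u)=\{i\in[n-1]:u(i)>u(i+1)\}$; for $I\subseteq[n-1]$, $\mathbf{B}_I=\sum_{u\in S_n,\ \operatorname{Des}(u)\subseteq I}u$. A composition $\alpha=(\alpha_1,\dots,\alpha_p)$ of $n$ is a finite sequence of positive integers with sum $n$, of length $\ell(\alpha)=p$; $\operatorname{Comp}_n$ is the set of these. $\operatorname{Set}(\alpha)=\{\alpha_1,\alpha_1+\alpha_2,\dots,\alpha_1+\cdots+\alpha_{p-1}\}$, $\mathbf{B}_\alpha:=\mathbf{B}_{\operatorname{Set}(\alpha)}$; $\operatorname{Comp}(I)$ is the inverse of $\operatorname{Set}$. $\operatorname{LRM}(w)=\{i\in[n]: w(k)>i \text{ for all } k<w^{-1}(i)\}$, $\operatorname{LRM}'(w)=\{\ell-1:\ell\in\operatorname{LRM}(w),\ \ell>1\}$, $\operatorname{cLRM}'(w)=\operatorname{Comp}(\operatorname{LRM}'(w))$. For $\alpha,\beta\in\operatorname{Comp}_n$, $\eta_\beta(\alpha)$ is the number of functions $f:[\ell(\beta)]\to[\ell(\alpha)]$ with $\alpha_j=\sum_{i\in f^{-1}(j)}\beta_i$ for every $j\in[\ell(\alpha)]$. *)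

theory Defs
  imports "HOL-Combinatorics.Permutations" "HOL-Library.FuncSet"
begin

text \<open>Elements of the group algebra k[S_n] are functions
 (nat => nat) => k vanishing outside S_n.  Product: (uw)(i) = u(w(i)), i.e. uw = u o w.\<close>

definition Sn :: "nat \<Rightarrow> (nat \<Rightarrow> nat) set" where
  "Sn n = {w. w permutes {1..n}}"

definition gmult :: "nat \<Rightarrow> ((nat \<Rightarrow> nat) \<Rightarrow> 'k::comm_ring_1) \<Rightarrow> ((nat \<Rightarrow> nat) \<Rightarrow> 'k) \<Rightarrow> ((nat \<Rightarrow> nat) \<Rightarrow> 'k)" where
  "gmult n x y = (\<lambda>v. \<Sum>p\<in>{(u, w). u \<in> Sn n \<and> w \<in> Sn n \<and> u \<circ> w = v}. x (fst p) * y (snd p))"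

definition delta :: "(nat \<Rightarrow> nat) \<Rightarrow> ((nat \<Rightarrow> nat) \<Rightarrow> 'k::comm_ring_1)" where
  "delta w = (\<lambda>u. if u = w then 1 else 0)"

definition Des :: "nat \<Rightarrow> (nat \<Rightarrow> nat) \<Rightarrow> nat set" where
  "Des n u = {i \<in> {1..n - 1}. u i > u (Suc i)}"

definition BI :: "nat \<Rightarrow> nat set \<Rightarrow> ((nat \<Rightarrow> nat) \<Rightarrow> 'k::comm_ring_1)" where
  "BI n I = (\<lambda>u. if u \<in> Sn n \<and> Des n u \<subseteq> I then 1 else 0)"

definition Comp :: "nat \<Rightarrow> nat list set" where
  "Comp n = {\<alpha>. (\<forall>x\<in>set \<alpha>. 0 < x) \<and> sum_list \<alpha> = n}"

definition SetC :: "nat list \<Rightarrow> nat set" where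
  "SetC \<alpha> = {sum_list (take i \<alpha>) | i. 1 \<le> i \<and> i < length \<alpha>}"

definition CompOf :: "nat \<Rightarrow> nat set \<Rightarrow> nat list" where
  "CompOf n I = (THE \<alpha>. \<alpha> \<in> Comp n \<and> SetC \<alpha> = I)"

definition B_comp :: "nat \<Rightarrow> nat list \<Rightarrow> ((nat \<Rightarrow> nat) \<Rightarrow> 'k::comm_ring_1)" where
  "B_comp n \<alpha> = BI n (SetC \<alpha>)"

definition LRM :: "nat \<Rightarrow> (nat \<Rightarrow> nat) \<Rightarrow> nat set" where
  "LRM n w = {i \<in> {1..n}. \<forall>k. 1 \<le> k \<and> k < inv w i \<longrightarrow> w k > i}"

definition LRM' :: "nat \<Rightarrow> (nat \<Rightarrow> nat) \<Rightarrow> nat set" where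
  "LRM' n w = {l - 1 | l. l \<in> LRM n w \<and> l > 1}"

definition cLRM' :: "nat \<Rightarrow> (nat \<Rightarrow> nat) \<Rightarrow> nat list" where
  "cLRM' n w = CompOf n (LRM' n w)"

text \<open>eta_beta(alpha), with 0-based indices.\<close>
definition eta :: "nat list \<Rightarrow> nat list \<Rightarrow> nat" where
  "eta \<beta> \<alpha> = card {f \<in> {0..<length \<beta>} \<rightarrow>\<^sub>E {0..<length \<alpha>}.
      \<forall>j < length \<alpha>. \<alpha> ! j = (\<Sum>i\<in>{i. i < length \<beta> \<and> f i = j}. \<beta> ! i)}"

definition lrm_basis :: "nat \<Rightarrow> (nat \<Rightarrow> nat) \<Rightarrow> ((nat \<Rightarrow> nat) \<Rightarrow> 'k::comm_ring_1)" where
  "lrm_basis n w = gmult n (BI n (LRM' n w)) (delta w)"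

end

theory Submission
  imports Defs "HOL-Library.List_Lexorder" "HOL-Library.Nat_Bijection"
begin

definition rel :: "nat \<Rightarrow> (nat \<Rightarrow> nat) \<Rightarrow> (nat \<Rightarrow> nat) \<Rightarrow> (nat \<Rightarrow> nat) \<Rightarrow> bool" where
  "rel n g v x \<longleftrightarrow> (\<forall>i\<in>{1..n}. \<forall>j\<in>{1..n}. g i = g j \<longrightarrow> (v i < v j \<longleftrightarrow> x i < x j))"

definition Sg :: "nat \<Rightarrow> (nat \<Rightarrow> nat) \<Rightarrow> (nat \<Rightarrow> nat) \<Rightarrow> (nat \<Rightarrow> nat) \<Rightarrow> 'k::comm_ring_1" where
  "Sg n g v = (\<lambda>x. if x \<in> Sn n \<and> rel n g v x then 1 else 0)"

definition blkI :: "nat set \<Rightarrow> nat \<Rightarrow> nat" where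
  "blkI I a = card {t\<in>I. t < a}"

lemma rel_refl: "rel n g v v" by (auto simp: rel_def)
lemma rel_sym: "rel n g v x \<Longrightarrow> rel n g x v" unfolding rel_def by blast
lemma rel_trans: "rel n g v x \<Longrightarrow> rel n g x y \<Longrightarrow> rel n g v y" unfolding rel_def by blast

lemma Sn_perm: "w \<in> Sn n \<Longrightarrow> w permutes {1..n}" by (simp add: Sn_def)
lemma finite_Sn: "finite (Sn n)"
  unfolding Sn_def by (rule finite_permutations) simp
lemma Sn_inj: "w \<in> Sn n \<Longrightarrow> inj w"
  by (rule permutes_inj[OF Sn_perm])
lemma Sn_range: "w \<in> Sn n \<Longrightarrow> i \<in> {1..n} \<Longrightarrow> w i \<in> {1..n}"
  by (rule permutes_in_image[OF Sn_perm, THEN iffD2])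
lemma Sn_out: "w \<in> Sn n \<Longrightarrow> i \<notin> {1..n} \<Longrightarrow> w i = i"
  by (rule permutes_not_in[OF Sn_perm])
lemma Sn_comp: "u \<in> Sn n \<Longrightarrow> w \<in> Sn n \<Longrightarrow> u \<circ> w \<in> Sn n"
  unfolding Sn_def by (simp add: permutes_compose)
lemma Sn_inv: "w \<in> Sn n \<Longrightarrow> inv w \<in> Sn n"
  unfolding Sn_def by (simp add: permutes_inv)
lemma Sn_inv_o: "w \<in> Sn n \<Longrightarrow> inv w \<circ> w = id" "w \<in> Sn n \<Longrightarrow> w \<circ> inv w = id"
  by (rule permutes_inv_o(2)[OF Sn_perm], assumption) (rule permutes_inv_o(1)[OF Sn_perm], assumption)
lemma Sn_inv_app: "w \<in> Sn n \<Longrightarrow> inv w (w i) = i" "w \<in> Sn n \<Longrightarrow> w (inv w i) = i"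
  by (rule permutes_inverses(2)[OF Sn_perm], assumption) (rule permutes_inverses(1)[OF Sn_perm], assumption)

lemma rel_imp:
  assumes "v \<in> Sn n" "x \<in> Sn n"
    and "\<And>i j. i\<in>{1..n} \<Longrightarrow> j\<in>{1..n} \<Longrightarrow> g i = g j \<Longrightarrow> v i < v j \<Longrightarrow> x i < x j"
  shows "rel n g v x"
  unfolding rel_def
proof (intro ballI impI iffI)
  fix i j assume "i\<in>{1..n}" "j\<in>{1..n}" "g i = g j"
  { assume "v i < v j" thus "x i < x j" using assms \<open>i\<in>_\<close> \<open>j\<in>_\<close> \<open>g i = g j\<close> by blast }
  { assume h: "x i < x j"
    hence "i \<noteq> j" by auto
    hence "v i \<noteq> v j" using Sn_inj[OF assms(1)] by (meson injD)
    moreover have "\<not> v j < v i" using assms(3)[of j i] \<open>i\<in>_\<close> \<open>j\<in>_\<close> \<open>g i = g j\<close> h by auto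
    ultimately show "v i < v j" by auto }
qed

lemma gmult_eq:
  fixes X Y :: "(nat \<Rightarrow> nat) \<Rightarrow> 'k::comm_ring_1"
  shows "gmult n X Y x = (if x \<in> Sn n then (\<Sum>y\<in>Sn n. X (x \<circ> inv y) * Y y) else 0)"
proof (cases "x \<in> Sn n")
  case True
  have eq: "{(u, w). u \<in> Sn n \<and> w \<in> Sn n \<and> u \<circ> w = x} = (\<lambda>y. (x \<circ> inv y, y)) ` Sn n"
  proof (rule set_eqI, rule iffI)
    fix p assume "p \<in> {(u, w). u \<in> Sn n \<and> w \<in> Sn n \<and> u \<circ> w = x}"
    then obtain u w where p: "p = (u,w)" "u \<in> Sn n" "w \<in> Sn n" "u \<circ> w = x" by auto
    have "x \<circ> inv w = u" using p Sn_inv_o[of w n] by (metis comp_assoc comp_id)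
    thus "p \<in> (\<lambda>y. (x \<circ> inv y, y)) ` Sn n" using p by auto
  next
    fix p assume "p \<in> (\<lambda>y. (x \<circ> inv y, y)) ` Sn n"
    then obtain y where "y \<in> Sn n" "p = (x \<circ> inv y, y)" by auto
    thus "p \<in> {(u, w). u \<in> Sn n \<and> w \<in> Sn n \<and> u \<circ> w = x}"
      using True Sn_comp Sn_inv Sn_inv_o[of y n] by (auto simp: comp_assoc)
  qed
  have inj: "inj_on (\<lambda>y. (x \<circ> inv y, y)) (Sn n)" by (auto simp: inj_on_def)
  show ?thesis using True unfolding gmult_def eq
    by (simp add: sum.reindex[OF inj])
next
  case False
  have e: "{(u, w). u \<in> Sn n \<and> w \<in> Sn n \<and> u \<circ> w = x} = {}" using False Sn_comp by auto
  show ?thesis using False unfolding gmult_def by (simp add: e)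
qed

lemma blkI_mono: "finite I \<Longrightarrow> a \<le> b \<Longrightarrow> blkI I a \<le> blkI I b"
  unfolding blkI_def by (rule card_mono) auto

lemma blkI_eq_iff:
  assumes "finite I" "a \<le> b"
  shows "blkI I a = blkI I b \<longleftrightarrow> \<not> (\<exists>t\<in>I. a \<le> t \<and> t < b)"
proof -
  have sub: "{t\<in>I. t < a} \<subseteq> {t\<in>I. t < b}" using assms by auto
  have fin: "finite {t\<in>I. t < b}" using assms by auto
  have 1: "blkI I a = blkI I b \<longleftrightarrow> {t\<in>I. t < a} = {t\<in>I. t < b}"
  proof
    assume "blkI I a = blkI I b"
    thus "{t\<in>I. t < a} = {t\<in>I. t < b}" using card_subset_eq[OF fin sub] unfolding blkI_def by simp
  next
    assume "{t\<in>I. t < a} = {t\<in>I. t < b}" thus "blkI I a = blkI I b" unfolding blkI_def by simp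
  qed
  have 2: "{t\<in>I. t < a} = {t\<in>I. t < b} \<longleftrightarrow> \<not> (\<exists>t\<in>I. a \<le> t \<and> t < b)"
  proof
    assume e: "{t\<in>I. t < a} = {t\<in>I. t < b}"
    show "\<not> (\<exists>t\<in>I. a \<le> t \<and> t < b)"
    proof
      assume "\<exists>t\<in>I. a \<le> t \<and> t < b"
      then obtain t where t: "t \<in> I" "a \<le> t" "t < b" by blast
      hence "t \<in> {t\<in>I. t < b}" by simp
      hence "t \<in> {t\<in>I. t < a}" using e by simp
      thus False using t by simp
    qed
  next
    assume h: "\<not> (\<exists>t\<in>I. a \<le> t \<and> t < b)"
    show "{t\<in>I. t < a} = {t\<in>I. t < b}"
    proof (rule equalityI[OF sub], rule subsetI)
      fix t assume "t \<in> {t\<in>I. t < b}"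
      hence "t \<in> I" "t < b" by auto
      hence "t < a" using h by (meson not_le)
      thus "t \<in> {t\<in>I. t < a}" using \<open>t \<in> I\<close> by simp
    qed
  qed
  show ?thesis using 1 2 by simp
qed

lemma blkI_lt: "finite I \<Longrightarrow> blkI I a < blkI I b \<Longrightarrow> a < b"
proof (rule ccontr)
  assume "finite I" "blkI I a < blkI I b" "\<not> a < b"
  hence "blkI I b \<le> blkI I a" using blkI_mono[of I b a] by simp
  thus False using \<open>blkI I a < blkI I b\<close> by simp
qed

lemma Des_sub_iff:
  assumes u: "u \<in> Sn n" and I: "finite I"
  shows "Des n u \<subseteq> I \<longleftrightarrow> (\<forall>a\<in>{1..n}. \<forall>b\<in>{1..n}. a < b \<and> blkI I a = blkI I b \<longrightarrow> u a < u b)"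
proof
  assume D: "Des n u \<subseteq> I"
  show "\<forall>a\<in>{1..n}. \<forall>b\<in>{1..n}. a < b \<and> blkI I a = blkI I b \<longrightarrow> u a < u b"
  proof (intro ballI impI)
    fix a b assume a: "a\<in>{1..n}" and b: "b\<in>{1..n}" and ab: "a < b \<and> blkI I a = blkI I b"
    hence nt: "\<not> (\<exists>t\<in>I. a \<le> t \<and> t < b)" using blkI_eq_iff[OF I, of a b] by auto
    have "\<forall>c. a < c \<longrightarrow> c \<le> b \<longrightarrow> u a < u c"
    proof (intro allI impI)
      fix c assume "a < c" "c \<le> b"
      thus "u a < u c"
      proof (induction c rule: less_induct)
        case (less c)
        define d where "d = c - 1"
        have c: "c = Suc d" using less.prems d_def by auto
        have dI: "d \<notin> I" using nt less.prems c a by auto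
        have dn: "d \<in> {1..n-1}" using less.prems c a b by auto
        hence "d \<notin> Des n u" using D dI by auto
        hence le: "u d \<le> u c" using dn c unfolding Des_def by auto
        have "u d \<noteq> u c" using Sn_inj[OF u] c by (metis injD n_not_Suc_n)
        hence lt: "u d < u c" using le by auto
        show ?case
        proof (cases "a = d")
          case True thus ?thesis using lt by simp
        next
          case False
          hence "u a < u d" using less.IH[of d] less.prems c by auto
          thus ?thesis using lt by simp
        qed
      qed
    qed
    thus "u a < u b" using ab by auto
  qed
next
  assume H: "\<forall>a\<in>{1..n}. \<forall>b\<in>{1..n}. a < b \<and> blkI I a = blkI I b \<longrightarrow> u a < u b"
  show "Des n u \<subseteq> I"
  proof
    fix i assume i: "i \<in> Des n u"
    hence i1: "i \<in> {1..n-1}" and gt: "u i > u (Suc i)" by (auto simp: Des_def)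
    show "i \<in> I"
    proof (rule ccontr)
      assume "i \<notin> I"
      hence "\<not> (\<exists>t\<in>I. i \<le> t \<and> t < Suc i)" by (auto simp: less_Suc_eq_le)
      hence "blkI I i = blkI I (Suc i)" using blkI_eq_iff[OF I, of i "Suc i"] by simp
      hence "u i < u (Suc i)" using H i1 by auto
      thus False using gt by simp
    qed
  qed
qed

lemma Des_comp_inv_iff:
  assumes x: "x \<in> Sn n" and y: "y \<in> Sn n" and I: "finite I"
  shows "Des n (x \<circ> inv y) \<subseteq> I \<longleftrightarrow> rel n (\<lambda>i. blkI I (y i)) y x"
proof -
  have u: "x \<circ> inv y \<in> Sn n" using x y Sn_comp Sn_inv by blast
  have "Des n (x \<circ> inv y) \<subseteq> I \<longleftrightarrow>
     (\<forall>i\<in>{1..n}. \<forall>j\<in>{1..n}. y i < y j \<and> blkI I (y i) = blkI I (y j) \<longrightarrow> x i < x j)"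
    (is "_ \<longleftrightarrow> ?R")
  proof -
    have "Des n (x \<circ> inv y) \<subseteq> I \<longleftrightarrow> (\<forall>a\<in>{1..n}. \<forall>b\<in>{1..n}. a < b \<and> blkI I a = blkI I b \<longrightarrow> (x \<circ> inv y) a < (x \<circ> inv y) b)"
      by (rule Des_sub_iff[OF u I])
    also have "\<dots> \<longleftrightarrow> ?R"
    proof
      assume L: "\<forall>a\<in>{1..n}. \<forall>b\<in>{1..n}. a < b \<and> blkI I a = blkI I b \<longrightarrow> (x \<circ> inv y) a < (x \<circ> inv y) b"
      show ?R
      proof (intro ballI impI)
        fix i j assume "i\<in>{1..n}" "j\<in>{1..n}" "y i < y j \<and> blkI I (y i) = blkI I (y j)"
        thus "x i < x j" using L[rule_format, of "y i" "y j"] Sn_range[OF y] Sn_inv_app[OF y] by auto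
      qed
    next
      assume R: ?R
      show "\<forall>a\<in>{1..n}. \<forall>b\<in>{1..n}. a < b \<and> blkI I a = blkI I b \<longrightarrow> (x \<circ> inv y) a < (x \<circ> inv y) b"
      proof (intro ballI impI)
        fix a b assume a: "a\<in>{1..n}" and b: "b\<in>{1..n}" and ab: "a < b \<and> blkI I a = blkI I b"
        have "inv y a \<in> {1..n}" "inv y b \<in> {1..n}" using a b Sn_range[OF Sn_inv[OF y]] by auto
        thus "(x \<circ> inv y) a < (x \<circ> inv y) b" using R ab Sn_inv_app[OF y] by fastforce
      qed
    qed
    finally show ?thesis .
  qed
  also have "?R \<longleftrightarrow> rel n (\<lambda>i. blkI I (y i)) y x"
  proof
    assume ?R thus "rel n (\<lambda>i. blkI I (y i)) y x" using rel_imp[OF y x] by auto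
  next
    assume "rel n (\<lambda>i. blkI I (y i)) y x" thus ?R unfolding rel_def by auto
  qed
  finally show ?thesis .
qed

lemma delta_sum:
  fixes f :: "(nat \<Rightarrow> nat) \<Rightarrow> 'k::comm_ring_1"
  assumes "w \<in> Sn n"
  shows "(\<Sum>y\<in>Sn n. f y * delta w y) = f w"
proof -
  have "(\<Sum>y\<in>Sn n. f y * delta w y) = (\<Sum>y\<in>Sn n. if y = w then f y else 0)"
    by (rule sum.cong) (auto simp: delta_def)
  also have "\<dots> = f w" using assms finite_Sn by (simp add: sum.delta)
  finally show ?thesis .
qed

lemma BI_val: "u \<in> Sn n \<Longrightarrow> BI n I u = (if Des n u \<subseteq> I then 1 else 0)"
  by (simp add: BI_def)

lemma finite_LRM: "finite (LRM n w)" unfolding LRM_def by auto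
lemma finite_LRM': "finite (LRM' n w)"
proof -
  have "LRM' n w = (\<lambda>l. l - 1) ` {l\<in>LRM n w. l > 1}" unfolding LRM'_def by auto
  thus ?thesis using finite_LRM by simp
qed

lemma lrm_basis_Sg:
  assumes w: "w \<in> Sn n"
  shows "(lrm_basis n w :: (nat \<Rightarrow> nat) \<Rightarrow> 'k::comm_ring_1) = Sg n (\<lambda>i. blkI (LRM' n w) (w i)) w"
proof
  fix x
  show "(lrm_basis n w :: (nat \<Rightarrow> nat) \<Rightarrow> 'k) x = Sg n (\<lambda>i. blkI (LRM' n w) (w i)) w x"
  proof (cases "x \<in> Sn n")
    case True
    have u: "x \<circ> inv w \<in> Sn n" using True w Sn_comp Sn_inv by blast
    have "(lrm_basis n w :: (nat \<Rightarrow> nat) \<Rightarrow> 'k) x = BI n (LRM' n w) (x \<circ> inv w)"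
      unfolding lrm_basis_def gmult_eq using True delta_sum[OF w] by simp
    also have "\<dots> = (if Des n (x \<circ> inv w) \<subseteq> LRM' n w then 1 else 0)"
      by (rule BI_val[OF u])
    also have "\<dots> = (if rel n (\<lambda>i. blkI (LRM' n w) (w i)) w x then 1 else 0)"
      using Des_comp_inv_iff[OF True w finite_LRM'[of n w]] by simp
    finally show ?thesis using True by (simp add: Sg_def)
  next
    case False thus ?thesis unfolding lrm_basis_def gmult_eq Sg_def by simp
  qed
qed

definition ps :: "nat list \<Rightarrow> nat \<Rightarrow> nat" where
  "ps \<alpha> i = sum_list (take i \<alpha>)"

lemma Comp_pos: "\<alpha> \<in> Comp n \<Longrightarrow> i < length \<alpha> \<Longrightarrow> 0 < \<alpha> ! i"
  unfolding Comp_def using nth_mem by blast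

lemma ps_Suc: "i < length \<alpha> \<Longrightarrow> ps \<alpha> (Suc i) = ps \<alpha> i + \<alpha> ! i"
  unfolding ps_def by (simp add: take_Suc_conv_app_nth)

lemma ps_0[simp]: "ps \<alpha> 0 = 0" by (simp add: ps_def)

lemma ps_len: "\<alpha> \<in> Comp n \<Longrightarrow> ps \<alpha> (length \<alpha>) = n"
  unfolding ps_def Comp_def by simp

lemma ps_strict:
  assumes "\<alpha> \<in> Comp n" "i < j" "j \<le> length \<alpha>"
  shows "ps \<alpha> i < ps \<alpha> j"
  using assms(2,3)
proof (induction j)
  case 0 thus ?case by simp
next
  case (Suc j)
  have "ps \<alpha> (Suc j) = ps \<alpha> j + \<alpha> ! j" using Suc.prems ps_Suc by simp
  moreover have "0 < \<alpha> ! j" using Comp_pos[OF assms(1)] Suc.prems by simp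
  ultimately show ?case using Suc by (cases "i = j") auto
qed

lemma ps_mono:
  assumes "\<alpha> \<in> Comp n" "i \<le> j" "j \<le> length \<alpha>"
  shows "ps \<alpha> i \<le> ps \<alpha> j"
  using ps_strict[OF assms(1)] assms by (cases "i = j") (auto intro: less_imp_le)

lemma ps_le_n: "\<alpha> \<in> Comp n \<Longrightarrow> j \<le> length \<alpha> \<Longrightarrow> ps \<alpha> j \<le> n"
  using ps_mono[of \<alpha> n j "length \<alpha>"] ps_len by simp

lemma SetC_ps: "SetC \<alpha> = ps \<alpha> ` {1..<length \<alpha>}"
  unfolding SetC_def ps_def by auto

lemma finite_SetC: "finite (SetC \<alpha>)" unfolding SetC_ps by simp

lemma ps_inj: "\<alpha> \<in> Comp n \<Longrightarrow> inj_on (ps \<alpha>) {0..length \<alpha>}"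
proof (rule inj_onI)
  fix i j assume "\<alpha> \<in> Comp n" "i \<in> {0..length \<alpha>}" "j \<in> {0..length \<alpha>}" "ps \<alpha> i = ps \<alpha> j"
  thus "i = j" using ps_strict[of \<alpha> n i j] ps_strict[of \<alpha> n j i] by (cases "i < j"; cases "j < i") auto
qed

lemma card_SetC: "\<alpha> \<in> Comp n \<Longrightarrow> card (SetC \<alpha>) = length \<alpha> - 1"
proof -
  assume a: "\<alpha> \<in> Comp n"
  have "inj_on (ps \<alpha>) {1..<length \<alpha>}" using ps_inj[OF a] by (rule inj_on_subset) auto
  thus ?thesis unfolding SetC_ps by (simp add: card_image)
qed

lemma blk_at:
  assumes a: "\<alpha> \<in> Comp n" and j: "j < length \<alpha>" and lo: "ps \<alpha> j < x" and hi: "x \<le> ps \<alpha> (Suc j)"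
  shows "blkI (SetC \<alpha>) x = j"
proof -
  have "{t \<in> SetC \<alpha>. t < x} = ps \<alpha> ` {i\<in>{1..<length \<alpha>}. ps \<alpha> i < x}"
    unfolding SetC_ps by auto
  also have "{i\<in>{1..<length \<alpha>}. ps \<alpha> i < x} = {1..j}"
  proof (rule set_eqI, rule iffI)
    fix i assume "i \<in> {i\<in>{1..<length \<alpha>}. ps \<alpha> i < x}"
    hence i: "1 \<le> i" "i < length \<alpha>" "ps \<alpha> i < x" by auto
    have "i \<le> j"
    proof (rule ccontr)
      assume "\<not> i \<le> j"
      hence "ps \<alpha> (Suc j) \<le> ps \<alpha> i" using ps_mono[OF a, of "Suc j" i] i by simp
      thus False using hi i by simp
    qed
    thus "i \<in> {1..j}" using i by simp
  next
    fix i assume "i \<in> {1..j}"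
    hence i: "1 \<le> i" "i \<le> j" by auto
    have "ps \<alpha> i \<le> ps \<alpha> j" using ps_mono[OF a i(2)] j by simp
    thus "i \<in> {i\<in>{1..<length \<alpha>}. ps \<alpha> i < x}" using i j lo by simp
  qed
  finally have e: "{t \<in> SetC \<alpha>. t < x} = ps \<alpha> ` {1..j}" .
  have "inj_on (ps \<alpha>) {1..j}" using j by (intro inj_on_subset[OF ps_inj[OF a]]) auto
  thus ?thesis unfolding blkI_def e by (simp add: card_image)
qed

lemma blk_exists:
  assumes a: "\<alpha> \<in> Comp n" and x: "x \<in> {1..n}"
  shows "\<exists>j<length \<alpha>. ps \<alpha> j < x \<and> x \<le> ps \<alpha> (Suc j)"
proof -
  define S where "S = {j. j \<le> length \<alpha> \<and> ps \<alpha> j < x}"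
  have "0 \<in> S" using x by (simp add: S_def)
  have finS: "finite S" unfolding S_def by simp
  define j where "j = Max S"
  have jS: "j \<in> S" using finS \<open>0 \<in> S\<close> j_def Max_in by blast
  have jl: "j < length \<alpha>"
  proof (rule ccontr)
    assume "\<not> j < length \<alpha>"
    hence "j = length \<alpha>" using jS S_def by auto
    thus False using jS ps_len[OF a] x by (auto simp: S_def)
  qed
  have "\<not> ps \<alpha> (Suc j) < x"
  proof
    assume "ps \<alpha> (Suc j) < x"
    hence "Suc j \<in> S" using jl by (simp add: S_def)
    hence "Suc j \<le> j" using Max_ge[OF finS] j_def by blast
    thus False by simp
  qed
  thus ?thesis using jl jS by (auto simp: S_def not_less)
qed

lemma blk_lt_len:
  assumes a: "\<alpha> \<in> Comp n" and x: "x \<in> {1..n}"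
  shows "blkI (SetC \<alpha>) x < length \<alpha>"
  using blk_exists[OF a x] blk_at[OF a] by fastforce

lemma blk_fiber:
  assumes a: "\<alpha> \<in> Comp n" and j: "j < length \<alpha>"
  shows "{x\<in>{1..n}. blkI (SetC \<alpha>) x = j} = {ps \<alpha> j + 1 .. ps \<alpha> (Suc j)}"
proof (rule set_eqI, rule iffI)
  fix x assume "x \<in> {x\<in>{1..n}. blkI (SetC \<alpha>) x = j}"
  hence x: "x \<in> {1..n}" and bx: "blkI (SetC \<alpha>) x = j" by auto
  obtain j' where j': "j' < length \<alpha>" "ps \<alpha> j' < x" "x \<le> ps \<alpha> (Suc j')" using blk_exists[OF a x] by blast
  have "j' = j" using blk_at[OF a j'] bx by simp
  thus "x \<in> {ps \<alpha> j + 1 .. ps \<alpha> (Suc j)}" using j' by simp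
next
  fix x assume x: "x \<in> {ps \<alpha> j + 1 .. ps \<alpha> (Suc j)}"
  have "ps \<alpha> (Suc j) \<le> n" using ps_le_n[OF a] j by simp
  hence "x \<in> {1..n}" using x by simp
  moreover have "blkI (SetC \<alpha>) x = j" using blk_at[OF a j] x by simp
  ultimately show "x \<in> {x\<in>{1..n}. blkI (SetC \<alpha>) x = j}" by simp
qed

lemma card_blk_fiber:
  assumes a: "\<alpha> \<in> Comp n" and j: "j < length \<alpha>"
  shows "card {x\<in>{1..n}. blkI (SetC \<alpha>) x = j} = \<alpha> ! j"
  using blk_fiber[OF a j] ps_Suc[OF j] by simp

lemma card_blk_fiber_out:
  assumes a: "\<alpha> \<in> Comp n" and j: "\<not> j < length \<alpha>"
  shows "{x\<in>{1..n}. blkI (SetC \<alpha>) x = j} = {}"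
  using blk_lt_len[OF a] j by auto

lemma blk_image:
  assumes a: "\<alpha> \<in> Comp n"
  shows "blkI (SetC \<alpha>) ` {1..n} = {0..<length \<alpha>}"
proof (rule set_eqI, rule iffI)
  fix j assume "j \<in> blkI (SetC \<alpha>) ` {1..n}"
  thus "j \<in> {0..<length \<alpha>}" using blk_lt_len[OF a] by auto
next
  fix j assume "j \<in> {0..<length \<alpha>}"
  hence j: "j < length \<alpha>" by simp
  hence "\<alpha> ! j > 0" using Comp_pos[OF a] by simp
  hence "ps \<alpha> (Suc j) \<in> {x\<in>{1..n}. blkI (SetC \<alpha>) x = j}"
    unfolding blk_fiber[OF a j] using ps_Suc[OF j] by simp
  thus "j \<in> blkI (SetC \<alpha>) ` {1..n}" by (metis (mono_tags, lifting) image_eqI mem_Collect_eq)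
qed

lemma Comp_unique:
  assumes a: "\<alpha> \<in> Comp n" and b: "\<beta> \<in> Comp n" and e: "SetC \<alpha> = SetC \<beta>"
  shows "\<alpha> = \<beta>"
proof -
  have l: "length \<alpha> = length \<beta>"
    using blk_image[OF a] blk_image[OF b] e by (metis card_atLeastLessThan diff_zero)
  show ?thesis
  proof (rule nth_equalityI[OF l])
    fix i assume "i < length \<alpha>"
    thus "\<alpha> ! i = \<beta> ! i" using card_blk_fiber[OF a] card_blk_fiber[OF b] e l by metis
  qed
qed

lemma SetC_snoc:
  assumes "\<alpha> \<noteq> []"
  shows "SetC (\<alpha> @ [c]) = SetC \<alpha> \<union> {sum_list \<alpha>}"
proof -
  have "SetC (\<alpha> @ [c]) = (\<lambda>i. sum_list (take i (\<alpha> @ [c]))) ` {1..<length \<alpha> + 1}"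
    unfolding SetC_ps ps_def by simp
  also have "\<dots> = (\<lambda>i. sum_list (take i \<alpha>)) ` {1..length \<alpha>}"
    by (rule image_cong) (auto simp: take_append)
  also have "{1..length \<alpha>} = {1..<length \<alpha>} \<union> {length \<alpha>}" using assms by (cases \<alpha>) auto
  also have "(\<lambda>i. sum_list (take i \<alpha>)) ` ({1..<length \<alpha>} \<union> {length \<alpha>}) = SetC \<alpha> \<union> {sum_list \<alpha>}"
    unfolding SetC_def by auto
  finally show ?thesis .
qed

lemma Comp_exists:
  "I \<subseteq> {1..n-1} \<Longrightarrow> \<exists>\<alpha>\<in>Comp n. SetC \<alpha> = I"
proof (induction "card I" arbitrary: I n rule: less_induct)
  case less
  show ?case
  proof (cases "n = 0")
    case True
    hence "I = {}" using less.prems by auto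
    moreover have "[] \<in> Comp 0" by (simp add: Comp_def)
    moreover have "SetC [] = {}" by (simp add: SetC_def)
    ultimately show ?thesis using True by blast
  next
    case n: False
    show ?thesis
    proof (cases "I = {}")
      case True
      have "[n] \<in> Comp n" using n by (simp add: Comp_def)
      moreover have "SetC [n] = {}" by (simp add: SetC_def)
      ultimately show ?thesis using True by blast
    next
      case False
      have finI: "finite I" using less.prems finite_subset by blast
      define m where "m = Max I"
      have mI: "m \<in> I" using False finI m_def Max_in by blast
      hence m: "1 \<le> m" "m \<le> n - 1" using less.prems by auto
      have sub: "I - {m} \<subseteq> {1..m-1}"
      proof
        fix t assume t: "t \<in> I - {m}"
        hence "t \<le> m" using Max_ge[OF finI] m_def by blast
        thus "t \<in> {1..m-1}" using t less.prems by auto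
      qed
      have "card (I - {m}) < card I" using mI finI by (meson card_Diff1_less)
      then obtain \<alpha>' where a': "\<alpha>' \<in> Comp m" "SetC \<alpha>' = I - {m}" using less.hyps sub by blast
      have ne: "\<alpha>' \<noteq> []" using a' m by (auto simp: Comp_def)
      have sm: "sum_list \<alpha>' = m" using a' by (simp add: Comp_def)
      have "\<alpha>' @ [n - m] \<in> Comp n" using a' m n by (auto simp: Comp_def)
      moreover have "SetC (\<alpha>' @ [n - m]) = I"
        using SetC_snoc[OF ne] a' sm mI by auto
      ultimately show ?thesis by blast
    qed
  qed
qed

lemma CompOf_props:
  assumes "I \<subseteq> {1..n-1}"
  shows "CompOf n I \<in> Comp n" "SetC (CompOf n I) = I"
proof -
  obtain \<alpha> where a: "\<alpha> \<in> Comp n" "SetC \<alpha> = I" using Comp_exists[OF assms] by blast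
  have ex: "\<exists>!\<alpha>. \<alpha> \<in> Comp n \<and> SetC \<alpha> = I"
    using a Comp_unique by blast
  have "CompOf n I \<in> Comp n \<and> SetC (CompOf n I) = I"
    unfolding CompOf_def by (rule theI'[OF ex])
  thus "CompOf n I \<in> Comp n" "SetC (CompOf n I) = I" by auto
qed

lemma SetC_sub: "\<alpha> \<in> Comp n \<Longrightarrow> SetC \<alpha> \<subseteq> {1..n-1}"
proof
  fix t assume a: "\<alpha> \<in> Comp n" and "t \<in> SetC \<alpha>"
  then obtain i where i: "1 \<le> i" "i < length \<alpha>" "t = ps \<alpha> i" unfolding SetC_ps by auto
  have "ps \<alpha> 0 < ps \<alpha> i" using ps_strict[OF a, of 0 i] i by simp
  moreover have "ps \<alpha> i < ps \<alpha> (length \<alpha>)" using ps_strict[OF a, of i "length \<alpha>"] i by simp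
  ultimately show "t \<in> {1..n-1}" using i ps_len[OF a] by simp
qed

lemma sum_ind:
  assumes "finite A"
  shows "(\<Sum>x\<in>A. if P x then (1::'k::comm_ring_1) else 0) = of_nat (card {x\<in>A. P x})"
proof -
  have "(\<Sum>x\<in>A. if P x then (1::'k) else 0) = (\<Sum>x\<in>{x\<in>A. P x}. 1)"
    using sum.inter_filter[OF assms, of "\<lambda>_. (1::'k)" P] by simp
  thus ?thesis by simp
qed

lemma fiber_perm_card:
  assumes y: "y \<in> Sn n"
  shows "card {i\<in>{1..n}. h (y i) = j} = card {a\<in>{1..n}. h a = j}"
proof -
  have "y ` {i\<in>{1..n}. h (y i) = j} = {a\<in>{1..n}. h a = j}"
  proof (rule set_eqI, rule iffI)
    fix a assume "a \<in> y ` {i\<in>{1..n}. h (y i) = j}"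
    thus "a \<in> {a\<in>{1..n}. h a = j}" using Sn_range[OF y] by auto
  next
    fix a assume a: "a \<in> {a\<in>{1..n}. h a = j}"
    have "inv y a \<in> {1..n}" using a Sn_range[OF Sn_inv[OF y]] by auto
    moreover have "y (inv y a) = a" using Sn_inv_app[OF y] by simp
    ultimately show "a \<in> y ` {i\<in>{1..n}. h (y i) = j}" using a by (metis (mono_tags, lifting) image_eqI mem_Collect_eq)
  qed
  moreover have "inj_on y {i\<in>{1..n}. h (y i) = j}" using Sn_inj[OF y] by (simp add: inj_on_def inj_def)
  ultimately show ?thesis using card_image by fastforce
qed

lemma construct_y:
  fixes z g v :: "nat \<Rightarrow> nat"
  assumes a: "\<alpha> \<in> Comp n" and x: "x \<in> Sn n"
    and fib: "\<And>j. card {i\<in>{1..n}. z i = j} = card {b\<in>{1..n}. blkI (SetC \<alpha>) b = j}"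
    and lay: "\<And>i j. i\<in>{1..n} \<Longrightarrow> j\<in>{1..n} \<Longrightarrow> g i = g j \<Longrightarrow> z i < z j \<Longrightarrow> v i < v j"
    and rx: "rel n (\<lambda>i. prod_encode (g i, z i)) v x"
  shows "\<exists>y\<in>Sn n. rel n g v y \<and> (\<forall>i\<in>{1..n}. blkI (SetC \<alpha>) (y i) = z i) \<and> rel n (\<lambda>i. blkI (SetC \<alpha>) (y i)) y x"
proof -
  let ?bk = "blkI (SetC \<alpha>)"
  define rk where "rk i = card {j\<in>{1..n}. z j = z i \<and> x j < x i}" for i
  define y where "y i = (if i \<in> {1..n} then ps \<alpha> (z i) + 1 + rk i else i)" for i
  have zl: "z i < length \<alpha>" if i: "i \<in> {1..n}" for i
  proof (rule ccontr)
    assume "\<not> z i < length \<alpha>"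
    hence "card {i'\<in>{1..n}. z i' = z i} = 0" using fib[of "z i"] card_blk_fiber_out[OF a] by simp
    moreover have "i \<in> {i'\<in>{1..n}. z i' = z i}" using i by simp
    ultimately show False by (metis (no_types, lifting) card_0_eq empty_iff finite_atLeastAtMost finite_subset mem_Collect_eq subsetI)
  qed
  have rk_lt: "rk i < \<alpha> ! (z i)" if i: "i \<in> {1..n}" for i
  proof -
    have "{j\<in>{1..n}. z j = z i \<and> x j < x i} \<subset> {j\<in>{1..n}. z j = z i}" using i by auto
    hence "rk i < card {j\<in>{1..n}. z j = z i}" unfolding rk_def by (rule psubset_card_mono[rotated]) simp
    thus ?thesis using fib[of "z i"] card_blk_fiber[OF a zl[OF i]] by simp
  qed
  have yin: "y i \<in> {ps \<alpha> (z i) + 1 .. ps \<alpha> (Suc (z i))}" if i: "i \<in> {1..n}" for i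
    using rk_lt[OF i] ps_Suc[OF zl[OF i]] i by (simp add: y_def)
  have ybk: "?bk (y i) = z i \<and> y i \<in> {1..n}" if i: "i \<in> {1..n}" for i
    using yin[OF i] blk_fiber[OF a zl[OF i]] by blast
  have rk_mono: "rk i < rk j" if "i\<in>{1..n}" "j\<in>{1..n}" "z i = z j" "x i < x j" for i j
  proof -
    have "{k\<in>{1..n}. z k = z i \<and> x k < x i} \<subset> {k\<in>{1..n}. z k = z j \<and> x k < x j}"
      using that by auto
    thus ?thesis unfolding rk_def by (rule psubset_card_mono[rotated]) simp
  qed
  have xinj: "x i = x j \<Longrightarrow> i = j" for i j using Sn_inj[OF x] by (meson injD)
  have rk_iff: "rk i < rk j \<longleftrightarrow> x i < x j" if "i\<in>{1..n}" "j\<in>{1..n}" "z i = z j" for i j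
  proof
    assume h: "rk i < rk j"
    show "x i < x j"
    proof (rule ccontr)
      assume "\<not> x i < x j"
      hence "x j < x i \<or> x i = x j" by auto
      thus False using rk_mono[of j i] that h xinj by fastforce
    qed
  qed (use rk_mono that in blast)
  have yinj: "inj_on y {1..n}"
  proof (rule inj_onI)
    fix i j assume i: "i \<in> {1..n}" and j: "j \<in> {1..n}" and e: "y i = y j"
    have zz: "z i = z j" using ybk[OF i] ybk[OF j] e by metis
    hence "rk i = rk j" using e i j by (simp add: y_def)
    hence "x i = x j" using rk_mono[OF i j zz] rk_mono[OF j i zz[symmetric]] by (metis less_irrefl nat_neq_iff)
    thus "i = j" using xinj by simp
  qed
  have yimg: "y ` {1..n} = {1..n}"
    by (rule endo_inj_surj) (use ybk yinj in auto)
  have yS: "y \<in> Sn n"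
    unfolding Sn_def using yinj yimg
    by (auto intro!: bij_imp_permutes simp: bij_betw_def y_def)
  have r1: "rel n (\<lambda>i. ?bk (y i)) y x"
    unfolding rel_def
  proof (intro ballI impI)
    fix i j assume i: "i\<in>{1..n}" and j: "j\<in>{1..n}" and e: "?bk (y i) = ?bk (y j)"
    have zz: "z i = z j" using ybk[OF i] ybk[OF j] e by metis
    show "y i < y j \<longleftrightarrow> x i < x j" using rk_iff[OF i j zz] zz i j by (simp add: y_def)
  qed
  have r2: "rel n g v y"
    unfolding rel_def
  proof (intro ballI impI)
    fix i j assume i: "i\<in>{1..n}" and j: "j\<in>{1..n}" and gg: "g i = g j"
    show "v i < v j \<longleftrightarrow> y i < y j"
    proof (cases "z i = z j")
      case True
      have "prod_encode (g i, z i) = prod_encode (g j, z j)" using True gg by simp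
      hence "v i < v j \<longleftrightarrow> x i < x j" using rx i j unfolding rel_def by blast
      thus ?thesis using rk_iff[OF i j True] True i j by (simp add: y_def)
    next
      case False
      have lt: "y i < y j" if "z i < z j" "i\<in>{1..n}" "j\<in>{1..n}" for i j
      proof -
        have "ps \<alpha> (Suc (z i)) \<le> ps \<alpha> (z j)" using ps_mono[OF a, of "Suc (z i)" "z j"] zl[OF that(3)] that by simp
        thus ?thesis using yin[OF that(2)] yin[OF that(3)] by simp
      qed
      show ?thesis
      proof (cases "z i < z j")
        case True thus ?thesis using lt[OF True i j] lay[OF i j gg True] by simp
      next
        case f2: False
        hence "z j < z i" using False by simp
        thus ?thesis using lt[OF _ j i] lay[OF j i gg[symmetric]] by simp
      qed
    qed
  qed
  show ?thesis using yS r1 r2 ybk by blast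
qed

lemma y_formula:
  assumes a: "\<alpha> \<in> Comp n" and x: "x \<in> Sn n" and y: "y \<in> Sn n"
    and r: "rel n (\<lambda>i. blkI (SetC \<alpha>) (y i)) y x" and i: "i \<in> {1..n}"
  shows "y i = ps \<alpha> (blkI (SetC \<alpha>) (y i)) + 1 + card {j\<in>{1..n}. blkI (SetC \<alpha>) (y j) = blkI (SetC \<alpha>) (y i) \<and> x j < x i}"
proof -
  let ?bk = "blkI (SetC \<alpha>)"
  define J where "J = ?bk (y i)"
  define F where "F = {j\<in>{1..n}. ?bk (y j) = J}"
  have yi: "y i \<in> {1..n}" using Sn_range[OF y i] .
  have Jl: "J < length \<alpha>" using blk_lt_len[OF a yi] J_def by simp
  have A: "{b\<in>{1..n}. ?bk b = J} = {ps \<alpha> J + 1 .. ps \<alpha> (Suc J)}" by (rule blk_fiber[OF a Jl])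
  have yiA: "y i \<in> {ps \<alpha> J + 1 .. ps \<alpha> (Suc J)}" using A yi J_def by blast
  have yF: "y ` F = {b\<in>{1..n}. ?bk b = J}"
  proof (rule set_eqI, rule iffI)
    fix b assume "b \<in> y ` F" thus "b \<in> {b\<in>{1..n}. ?bk b = J}" using Sn_range[OF y] by (auto simp: F_def)
  next
    fix b assume b: "b \<in> {b\<in>{1..n}. ?bk b = J}"
    have "inv y b \<in> {1..n}" using b Sn_range[OF Sn_inv[OF y]] by auto
    moreover have "y (inv y b) = b" using Sn_inv_app[OF y] by simp
    ultimately show "b \<in> y ` F" using b unfolding F_def by (metis (mono_tags, lifting) image_eqI mem_Collect_eq)
  qed
  have "{b\<in>{ps \<alpha> J + 1 .. ps \<alpha> (Suc J)}. b < y i} = y ` {j\<in>F. y j < y i}"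
    using yF A by auto
  moreover have "inj_on y {j\<in>F. y j < y i}" using Sn_inj[OF y] by (simp add: inj_on_def inj_def)
  ultimately have c1: "card {b\<in>{ps \<alpha> J + 1 .. ps \<alpha> (Suc J)}. b < y i} = card {j\<in>F. y j < y i}"
    by (simp add: card_image)
  have "{b\<in>{ps \<alpha> J + 1 .. ps \<alpha> (Suc J)}. b < y i} = {ps \<alpha> J + 1 ..< y i}" using yiA by auto
  hence c2: "card {b\<in>{ps \<alpha> J + 1 .. ps \<alpha> (Suc J)}. b < y i} = y i - (ps \<alpha> J + 1)" by simp
  have "{j\<in>F. y j < y i} = {j\<in>{1..n}. ?bk (y j) = J \<and> x j < x i}"
    using r i unfolding rel_def F_def J_def by auto
  thus ?thesis using c1 c2 yiA J_def by simp
qed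

definition Zset :: "nat \<Rightarrow> nat list \<Rightarrow> (nat \<Rightarrow> nat) \<Rightarrow> (nat \<Rightarrow> nat) \<Rightarrow> (nat \<Rightarrow> nat) set" where
  "Zset n \<alpha> g v = (\<lambda>y. restrict (\<lambda>i. blkI (SetC \<alpha>) (y i)) {1..n}) ` {y\<in>Sn n. rel n g v y}"

lemma finite_Zset: "finite (Zset n \<alpha> g v)"
  unfolding Zset_def using finite_Sn by simp

lemma count_eq:
  assumes a: "\<alpha> \<in> Comp n" and x: "x \<in> Sn n"
  shows "card {y\<in>Sn n. rel n g v y \<and> rel n (\<lambda>i. blkI (SetC \<alpha>) (y i)) y x}
       = card {z\<in>Zset n \<alpha> g v. rel n (\<lambda>i. prod_encode (g i, z i)) v x}"
proof -
  let ?bk = "blkI (SetC \<alpha>)"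
  let ?f = "\<lambda>y. restrict (\<lambda>i. ?bk (y i)) {1..n}"
  let ?Y = "{y\<in>Sn n. rel n g v y \<and> rel n (\<lambda>i. ?bk (y i)) y x}"
  let ?Z = "{z\<in>Zset n \<alpha> g v. rel n (\<lambda>i. prod_encode (g i, z i)) v x}"
  have "bij_betw ?f ?Y ?Z"
    unfolding bij_betw_def
  proof (intro conjI)
    show "inj_on ?f ?Y"
    proof (rule inj_onI)
      fix y y' assume yY: "y \<in> ?Y" and y'Y: "y' \<in> ?Y" and e: "?f y = ?f y'"
      have eb: "?bk (y i) = ?bk (y' i)" if "i \<in> {1..n}" for i
        using e that by (metis restrict_apply')
      show "y = y'"
      proof
        fix i show "y i = y' i"
        proof (cases "i \<in> {1..n}")
          case True
          have s: "{j\<in>{1..n}. ?bk (y j) = ?bk (y i) \<and> x j < x i} = {j\<in>{1..n}. ?bk (y' j) = ?bk (y' i) \<and> x j < x i}"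
            using eb True by auto
          show ?thesis using y_formula[OF a x, of y i] y_formula[OF a x, of y' i] yY y'Y True eb[OF True] s by simp
        next
          case False thus ?thesis using Sn_out[of y n i] Sn_out[of y' n i] yY y'Y by simp
        qed
      qed
    qed
  next
    show "?f ` ?Y = ?Z"
    proof (rule set_eqI, rule iffI)
      fix z assume "z \<in> ?f ` ?Y"
      then obtain y where yY: "y \<in> ?Y" and z: "z = ?f y" by blast
      have "z \<in> Zset n \<alpha> g v" unfolding Zset_def using yY z by blast
      moreover have "rel n (\<lambda>i. prod_encode (g i, z i)) v x"
        unfolding rel_def
      proof (intro ballI impI)
        fix i j assume i: "i\<in>{1..n}" and j: "j\<in>{1..n}" and pe: "prod_encode (g i, z i) = prod_encode (g j, z j)"
        hence gg: "g i = g j" and zz: "z i = z j" using prod_encode_eq by auto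
        have "?bk (y i) = ?bk (y j)" using zz i j z by simp
        thus "v i < v j \<longleftrightarrow> x i < x j" using yY gg i j unfolding rel_def by blast
      qed
      ultimately show "z \<in> ?Z" by simp
    next
      fix z assume zZ: "z \<in> ?Z"
      then obtain y0 where y0: "y0 \<in> Sn n" "rel n g v y0" and z: "z = ?f y0"
        unfolding Zset_def by blast
      have fib: "card {i\<in>{1..n}. z i = j} = card {b\<in>{1..n}. ?bk b = j}" for j
      proof -
        have "{i\<in>{1..n}. z i = j} = {i\<in>{1..n}. ?bk (y0 i) = j}" using z by auto
        thus ?thesis using fiber_perm_card[OF y0(1)] by simp
      qed
      have lay: "v i < v j" if "i\<in>{1..n}" "j\<in>{1..n}" "g i = g j" "z i < z j" for i j
      proof -
        have "?bk (y0 i) < ?bk (y0 j)" using that z by simp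
        hence "y0 i < y0 j" using blkI_lt[OF finite_SetC] by blast
        thus ?thesis using y0(2) that unfolding rel_def by blast
      qed
      have rx: "rel n (\<lambda>i. prod_encode (g i, z i)) v x" using zZ by simp
      obtain y where y: "y \<in> Sn n" "rel n g v y" "\<forall>i\<in>{1..n}. ?bk (y i) = z i" "rel n (\<lambda>i. ?bk (y i)) y x"
        using construct_y[OF a x fib lay rx] by blast
      have "?f y = z"
      proof
        fix i show "?f y i = z i" using y(3) z by (cases "i \<in> {1..n}") auto
      qed
      thus "z \<in> ?f ` ?Y" using y by blast
    qed
  qed
  thus ?thesis by (rule bij_betw_same_card)
qed

lemma prod_formula:
  assumes a: "\<alpha> \<in> Comp n"
  shows "(gmult n (B_comp n \<alpha>) (Sg n g v) :: (nat \<Rightarrow> nat) \<Rightarrow> 'k::comm_ring_1)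
       = (\<lambda>x. \<Sum>z\<in>Zset n \<alpha> g v. Sg n (\<lambda>i. prod_encode (g i, z i)) v x)"
proof
  fix x
  let ?bk = "blkI (SetC \<alpha>)"
  show "(gmult n (B_comp n \<alpha>) (Sg n g v) :: (nat \<Rightarrow> nat) \<Rightarrow> 'k) x = (\<Sum>z\<in>Zset n \<alpha> g v. Sg n (\<lambda>i. prod_encode (g i, z i)) v x)"
  proof (cases "x \<in> Sn n")
    case True
    have "(gmult n (B_comp n \<alpha>) (Sg n g v) :: (nat \<Rightarrow> nat) \<Rightarrow> 'k) x
        = (\<Sum>y\<in>Sn n. (B_comp n \<alpha> (x \<circ> inv y) :: 'k) * Sg n g v y)"
      using True by (simp add: gmult_eq)
    also have "\<dots> = (\<Sum>y\<in>Sn n. if rel n g v y \<and> rel n (\<lambda>i. ?bk (y i)) y x then 1 else 0)"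
    proof (rule sum.cong[OF refl])
      fix y assume y: "y \<in> Sn n"
      have u: "x \<circ> inv y \<in> Sn n" using True y Sn_comp Sn_inv by blast
      have "(B_comp n \<alpha> (x \<circ> inv y) :: 'k) = (if Des n (x \<circ> inv y) \<subseteq> SetC \<alpha> then 1 else 0)"
        unfolding B_comp_def by (rule BI_val[OF u])
      also have "\<dots> = (if rel n (\<lambda>i. ?bk (y i)) y x then 1 else 0)"
        using Des_comp_inv_iff[OF True y finite_SetC[of \<alpha>]] by simp
      finally show "(B_comp n \<alpha> (x \<circ> inv y) :: 'k) * Sg n g v y = (if rel n g v y \<and> rel n (\<lambda>i. ?bk (y i)) y x then 1 else 0)"
        using y by (simp add: Sg_def)
    qed
    also have "\<dots> = of_nat (card {y\<in>Sn n. rel n g v y \<and> rel n (\<lambda>i. ?bk (y i)) y x})"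
      by (rule sum_ind[OF finite_Sn])
    also have "\<dots> = of_nat (card {z\<in>Zset n \<alpha> g v. rel n (\<lambda>i. prod_encode (g i, z i)) v x})"
      using count_eq[OF a True] by simp
    also have "\<dots> = (\<Sum>z\<in>Zset n \<alpha> g v. if rel n (\<lambda>i. prod_encode (g i, z i)) v x then 1 else 0)"
      by (rule sum_ind[OF finite_Zset, symmetric])
    also have "\<dots> = (\<Sum>z\<in>Zset n \<alpha> g v. Sg n (\<lambda>i. prod_encode (g i, z i)) v x)"
      using True by (simp add: Sg_def)
    finally show ?thesis .
  next
    case False thus ?thesis by (simp add: gmult_eq Sg_def)
  qed
qed

definition nb :: "nat \<Rightarrow> (nat \<Rightarrow> nat) \<Rightarrow> nat" where
  "nb n g = card (g ` {1..n})"

lemma rel_cong: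
  assumes "\<And>i j. i\<in>{1..n} \<Longrightarrow> j\<in>{1..n} \<Longrightarrow> (g i = g j \<longleftrightarrow> g' i = g' j)"
  shows "rel n g v x = rel n g' v x"
  using assms unfolding rel_def by metis

lemma Sg_cong:
  assumes "\<And>i j. i\<in>{1..n} \<Longrightarrow> j\<in>{1..n} \<Longrightarrow> (g i = g j \<longleftrightarrow> g' i = g' j)"
  shows "Sg n g v = Sg n g' v"
  unfolding Sg_def using rel_cong[OF assms] by simp

lemma nb_less:
  assumes ref: "\<And>i j. i\<in>{1..n} \<Longrightarrow> j\<in>{1..n} \<Longrightarrow> h i = h j \<Longrightarrow> g i = g j"
    and ex: "i0\<in>{1..n}" "j0\<in>{1..n}" "g i0 = g j0" "h i0 \<noteq> h j0"
  shows "nb n g < nb n h"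
proof -
  define \<phi> where "\<phi> l = g (SOME i. i\<in>{1..n} \<and> h i = l)" for l
  have phi: "\<phi> (h i) = g i" if "i \<in> {1..n}" for i
  proof -
    have "\<exists>i'. i'\<in>{1..n} \<and> h i' = h i" using that by blast
    hence "(SOME i'. i'\<in>{1..n} \<and> h i' = h i) \<in> {1..n} \<and> h (SOME i'. i'\<in>{1..n} \<and> h i' = h i) = h i"
      by (rule someI_ex)
    thus ?thesis unfolding \<phi>_def using ref that by blast
  qed
  have img: "g ` {1..n} = \<phi> ` (h ` {1..n})"
    using phi by (auto simp: image_image intro!: image_cong)
  have ni: "\<not> inj_on \<phi> (h ` {1..n})"
  proof
    assume "inj_on \<phi> (h ` {1..n})"
    moreover have "\<phi> (h i0) = \<phi> (h j0)" using phi ex by simp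
    ultimately show False using ex by (meson image_eqI inj_onD)
  qed
  have fin: "finite (h ` {1..n})" by simp
  have "card (\<phi> ` (h ` {1..n})) \<le> card (h ` {1..n})" by (rule card_image_le[OF fin])
  moreover have "card (\<phi> ` (h ` {1..n})) \<noteq> card (h ` {1..n})"
    using ni eq_card_imp_inj_on[OF fin] by metis
  ultimately show ?thesis unfolding nb_def img by simp
qed

definition Z0 :: "nat \<Rightarrow> nat list \<Rightarrow> (nat \<Rightarrow> nat) \<Rightarrow> (nat \<Rightarrow> nat) \<Rightarrow> (nat \<Rightarrow> nat) set" where
  "Z0 n \<alpha> g v = {z\<in>Zset n \<alpha> g v. \<forall>i\<in>{1..n}. \<forall>j\<in>{1..n}. g i = g j \<longrightarrow> z i = z j}"

lemma prod_decomp: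
  assumes a: "\<alpha> \<in> Comp n"
  shows "(gmult n (B_comp n \<alpha>) (Sg n g v) :: (nat \<Rightarrow> nat) \<Rightarrow> 'k::comm_ring_1)
       = (\<lambda>x. of_nat (card (Z0 n \<alpha> g v)) * Sg n g v x
              + (\<Sum>z\<in>Zset n \<alpha> g v - Z0 n \<alpha> g v. Sg n (\<lambda>i. prod_encode (g i, z i)) v x))"
proof
  fix x
  define F where "F z = (Sg n (\<lambda>i. prod_encode (g i, z i)) v x :: 'k)" for z
  have sub: "Z0 n \<alpha> g v \<subseteq> Zset n \<alpha> g v" unfolding Z0_def by (rule Collect_subset)
  have fin: "finite (Zset n \<alpha> g v)" by (rule finite_Zset)
  have 1: "sum F (Zset n \<alpha> g v) = sum F (Zset n \<alpha> g v - Z0 n \<alpha> g v) + sum F (Z0 n \<alpha> g v)"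
    by (rule sum.subset_diff[OF sub fin])
  have 2: "sum F (Z0 n \<alpha> g v) = (\<Sum>z\<in>Z0 n \<alpha> g v. (Sg n g v x :: 'k))"
  proof (rule sum.cong[OF refl])
    fix z assume "z \<in> Z0 n \<alpha> g v"
    hence h: "\<forall>i\<in>{1..n}. \<forall>j\<in>{1..n}. g i = g j \<longrightarrow> z i = z j" unfolding Z0_def mem_Collect_eq by (rule conjunct2)
    have "(Sg n (\<lambda>i. prod_encode (g i, z i)) v :: (nat \<Rightarrow> nat) \<Rightarrow> 'k) = Sg n g v"
    proof (rule Sg_cong)
      fix i j assume ij: "i\<in>{1..n}" "j\<in>{1..n}"
      show "prod_encode (g i, z i) = prod_encode (g j, z j) \<longleftrightarrow> g i = g j"
      proof
        assume "prod_encode (g i, z i) = prod_encode (g j, z j)" thus "g i = g j" by simp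
      next
        assume gg: "g i = g j"
        hence "z i = z j" using h ij by blast
        thus "prod_encode (g i, z i) = prod_encode (g j, z j)" using gg by simp
      qed
    qed
    thus "F z = Sg n g v x" unfolding F_def by simp
  qed
  have 3: "(\<Sum>z\<in>Z0 n \<alpha> g v. (Sg n g v x :: 'k)) = of_nat (card (Z0 n \<alpha> g v)) * Sg n g v x"
    by simp
  have "(gmult n (B_comp n \<alpha>) (Sg n g v) :: (nat \<Rightarrow> nat) \<Rightarrow> 'k) x = sum F (Zset n \<alpha> g v)"
    unfolding prod_formula[OF a] F_def by (rule refl)
  also have "\<dots> = of_nat (card (Z0 n \<alpha> g v)) * Sg n g v x + sum F (Zset n \<alpha> g v - Z0 n \<alpha> g v)"
    using 1 2 3 by (metis add.commute)
  finally show "(gmult n (B_comp n \<alpha>) (Sg n g v) :: (nat \<Rightarrow> nat) \<Rightarrow> 'k) x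
       = of_nat (card (Z0 n \<alpha> g v)) * Sg n g v x
              + (\<Sum>z\<in>Zset n \<alpha> g v - Z0 n \<alpha> g v. Sg n (\<lambda>i. prod_encode (g i, z i)) v x)"
    unfolding F_def .
qed

lemma nb_rest:
  assumes "z \<in> Zset n \<alpha> g v - Z0 n \<alpha> g v"
  shows "nb n g < nb n (\<lambda>i. prod_encode (g i, z i))"
proof -
  obtain i0 j0 where ij: "i0\<in>{1..n}" "j0\<in>{1..n}" "g i0 = g j0" "z i0 \<noteq> z j0"
    using assms unfolding Z0_def by blast
  show ?thesis
    by (rule nb_less[OF _ ij(1,2,3)]) (use ij in auto)
qed

lemma card_comp_fiber:
  fixes g :: "nat \<Rightarrow> nat"
  assumes gl: "\<And>i. i\<in>{1..n} \<Longrightarrow> g i < m"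
  shows "card {i\<in>{1..n}. f (g i) = j} = (\<Sum>k\<in>{k. k < m \<and> f k = j}. card {i\<in>{1..n}. g i = k})"
proof -
  have "{i\<in>{1..n}. f (g i) = j} = (\<Union>k\<in>{k. k < m \<and> f k = j}. {i\<in>{1..n}. g i = k})"
    using gl by auto
  moreover have "card (\<Union>k\<in>{k. k < m \<and> f k = j}. {i\<in>{1..n}. g i = k}) = (\<Sum>k\<in>{k. k < m \<and> f k = j}. card {i\<in>{1..n}. g i = k})"
  proof (rule card_UN_disjoint)
    show "finite {k. k < m \<and> f k = j}" by (rule finite_subset[of _ "{..<m}"]) auto
    show "\<forall>k\<in>{k. k < m \<and> f k = j}. finite {i\<in>{1..n}. g i = k}" by simp
    show "\<forall>k\<in>{k. k < m \<and> f k = j}. \<forall>k'\<in>{k. k < m \<and> f k = j}. k \<noteq> k' \<longrightarrow> {i\<in>{1..n}. g i = k} \<inter> {i\<in>{1..n}. g i = k'} = {}"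
      by auto
  qed
  ultimately show ?thesis by simp
qed

lemma LRM_sub: "LRM n w \<subseteq> {1..n}" unfolding LRM_def by auto

lemma LRM'_sub: "LRM' n w \<subseteq> {1..n-1}"
  unfolding LRM'_def using LRM_sub by fastforce

lemma one_LRM:
  assumes w: "w \<in> Sn n" and n: "1 \<le> n"
  shows "1 \<in> LRM n w"
  unfolding LRM_def
proof (intro CollectI conjI allI impI)
  show "1 \<in> {1..n}" using n by simp
  fix k assume k: "1 \<le> k \<and> k < inv w 1"
  have "inv w 1 \<in> {1..n}" using Sn_range[OF Sn_inv[OF w]] n by simp
  hence kn: "k \<in> {1..n}" using k by simp
  have "w k \<noteq> 1" using k Sn_inv_app[OF w, of k] by (metis less_irrefl)
  moreover have "w k \<in> {1..n}" using Sn_range[OF w kn] .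
  ultimately show "w k > 1" by simp
qed

lemma card_LRM':
  assumes w: "w \<in> Sn n" and n: "1 \<le> n"
  shows "card (LRM' n w) + 1 = card (LRM n w)"
proof -
  have e: "LRM' n w = (\<lambda>l. l - 1) ` (LRM n w - {1})"
    unfolding LRM'_def using LRM_sub by force
  have "inj_on (\<lambda>l. l - 1) (LRM n w - {1})"
    using LRM_sub by (intro inj_onI) force
  hence "card (LRM' n w) = card (LRM n w - {1})" unfolding e by (rule card_image)
  moreover have "card (LRM n w - {1}) + 1 = card (LRM n w)"
    using one_LRM[OF w n] finite_LRM by (metis card_Suc_Diff1 Suc_eq_plus1)
  ultimately show ?thesis by simp
qed

lemma cLRM'_props:
  shows "cLRM' n w \<in> Comp n" "SetC (cLRM' n w) = LRM' n w"
  unfolding cLRM'_def using CompOf_props[OF LRM'_sub] by auto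

lemma length_cLRM':
  assumes w: "w \<in> Sn n"
  shows "length (cLRM' n w) = card (LRM n w)"
proof (cases "n = 0")
  case True
  have "cLRM' n w = []" using cLRM'_props(1)[of n w] True by (cases "cLRM' n w") (auto simp: Comp_def)
  moreover have "LRM n w = {}" using LRM_sub[of n w] True by auto
  ultimately show ?thesis by simp
next
  case False
  let ?b = "cLRM' n w"
  have "?b \<noteq> []" using cLRM'_props(1)[of n w] False by (auto simp: Comp_def)
  hence "length ?b = card (SetC ?b) + 1" using card_SetC[OF cLRM'_props(1)[of n w]] by simp
  thus ?thesis using card_LRM'[OF w] False cLRM'_props(2) by simp
qed

lemma nb_lrm:
  assumes w: "w \<in> Sn n"
  shows "nb n (\<lambda>i. blkI (LRM' n w) (w i)) = card (LRM n w)"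
proof -
  let ?b = "cLRM' n w"
  have "(\<lambda>i. blkI (LRM' n w) (w i)) ` {1..n} = blkI (SetC ?b) ` (w ` {1..n})"
    using cLRM'_props(2) by (simp add: image_image)
  also have "w ` {1..n} = {1..n}" using permutes_image[OF Sn_perm[OF w]] .
  also have "blkI (SetC ?b) ` {1..n} = {0..<length ?b}" by (rule blk_image[OF cLRM'_props(1)])
  finally show ?thesis unfolding nb_def using length_cLRM'[OF w] by simp
qed

lemma eta_count:
  assumes w: "w \<in> Sn n" and a: "\<alpha> \<in> Comp n"
  shows "card (Z0 n \<alpha> (\<lambda>i. blkI (LRM' n w) (w i)) w) = eta (cLRM' n w) \<alpha>"
proof -
  define \<beta> where "\<beta> = cLRM' n w"
  have b: "\<beta> \<in> Comp n" and sb: "SetC \<beta> = LRM' n w" using cLRM'_props \<beta>_def by auto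
  define g where "g i = blkI (SetC \<beta>) (w i)" for i
  have geq: "(\<lambda>i. blkI (LRM' n w) (w i)) = g" unfolding g_def sb by simp
  let ?bk = "blkI (SetC \<alpha>)"
  have gl: "g i < length \<beta>" if "i \<in> {1..n}" for i
    unfolding g_def using blk_lt_len[OF b Sn_range[OF w that]] .
  have gfib: "card {i\<in>{1..n}. g i = k} = \<beta> ! k" if "k < length \<beta>" for k
    unfolding g_def using fiber_perm_card[OF w, of "blkI (SetC \<beta>)" k] card_blk_fiber[OF b that] by simp
  have gsurj: "\<exists>i\<in>{1..n}. g i = k" if "k < length \<beta>" for k
  proof (rule ccontr)
    assume "\<not> (\<exists>i\<in>{1..n}. g i = k)"
    hence "{i\<in>{1..n}. g i = k} = {}" by auto
    hence "card {i\<in>{1..n}. g i = k} = 0" by (simp only: card.empty)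
    thus False using gfib[OF that] Comp_pos[OF b that] by linarith
  qed
  define E where "E = {f \<in> {0..<length \<beta>} \<rightarrow>\<^sub>E {0..<length \<alpha>}.
      \<forall>j < length \<alpha>. \<alpha> ! j = (\<Sum>i\<in>{i. i < length \<beta> \<and> f i = j}. \<beta> ! i)}"
  define \<Phi> where "\<Phi> f = restrict (\<lambda>i. f (g i)) {1..n}" for f :: "nat \<Rightarrow> nat"
  have sumfib: "card {i\<in>{1..n}. f (g i) = j} = (\<Sum>k\<in>{k. k < length \<beta> \<and> f k = j}. \<beta> ! k)" for f j
  proof -
    have "card {i\<in>{1..n}. f (g i) = j} = (\<Sum>k\<in>{k. k < length \<beta> \<and> f k = j}. card {i\<in>{1..n}. g i = k})"
      by (rule card_comp_fiber) (use gl in auto)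
    also have "\<dots> = (\<Sum>k\<in>{k. k < length \<beta> \<and> f k = j}. \<beta> ! k)"
      by (rule sum.cong[OF refl]) (use gfib in blast)
    finally show ?thesis .
  qed
  have "bij_betw \<Phi> E (Z0 n \<alpha> g w)"
    unfolding bij_betw_def
  proof (intro conjI)
    show "inj_on \<Phi> E"
    proof (rule inj_onI)
      fix f f' assume f: "f \<in> E" and f': "f' \<in> E" and e: "\<Phi> f = \<Phi> f'"
      show "f = f'"
      proof
        fix k show "f k = f' k"
        proof (cases "k < length \<beta>")
          case True
          then obtain i where i: "i \<in> {1..n}" "g i = k" using gsurj by blast
          have "\<Phi> f i = \<Phi> f' i" using e by simp
          thus ?thesis using i unfolding \<Phi>_def by simp
        next
          case False
          hence "k \<notin> {0..<length \<beta>}" by simp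
          have "f \<in> {0..<length \<beta>} \<rightarrow>\<^sub>E {0..<length \<alpha>}"
            using f unfolding E_def mem_Collect_eq by (rule conjunct1)
          moreover have "f' \<in> {0..<length \<beta>} \<rightarrow>\<^sub>E {0..<length \<alpha>}"
            using f' unfolding E_def mem_Collect_eq by (rule conjunct1)
          ultimately show ?thesis using PiE_arb \<open>k \<notin> _\<close> by metis
        qed
      qed
    qed
  next
    show "\<Phi> ` E = Z0 n \<alpha> g w"
    proof (rule set_eqI, rule iffI)
      fix z assume "z \<in> \<Phi> ` E"
      then obtain f where f: "f \<in> E" and z: "z = \<Phi> f" by blast
      have fP: "f \<in> {0..<length \<beta>} \<rightarrow>\<^sub>E {0..<length \<alpha>}" and
        fC: "\<forall>j < length \<alpha>. \<alpha> ! j = (\<Sum>i\<in>{i. i < length \<beta> \<and> f i = j}. \<beta> ! i)"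
        using f unfolding E_def mem_Collect_eq by (rule conjunct1, rule conjunct2)
      have fr: "f k < length \<alpha>" if "k < length \<beta>" for k
        using PiE_mem[OF fP, of k] that by simp
      have fc: "\<alpha> ! j = (\<Sum>k\<in>{k. k < length \<beta> \<and> f k = j}. \<beta> ! k)" if "j < length \<alpha>" for j
        using fC that by blast
      have zi: "z i = f (g i)" if "i \<in> {1..n}" for i using that z unfolding \<Phi>_def by simp
      have fib: "card {i\<in>{1..n}. z i = j} = card {c\<in>{1..n}. ?bk c = j}" for j
      proof -
        have "{i\<in>{1..n}. z i = j} = {i\<in>{1..n}. f (g i) = j}" using zi by auto
        hence c: "card {i\<in>{1..n}. z i = j} = (\<Sum>k\<in>{k. k < length \<beta> \<and> f k = j}. \<beta> ! k)"
          using sumfib by simp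
        show ?thesis
        proof (cases "j < length \<alpha>")
          case True thus ?thesis using c fc card_blk_fiber[OF a True] by simp
        next
          case False
          hence e1: "{k. k < length \<beta> \<and> f k = j} = {}" using fr by force
          have e2: "{c\<in>{1..n}. ?bk c = j} = {}" by (rule card_blk_fiber_out[OF a False])
          show ?thesis using c by (simp only: e1 e2 sum.empty card.empty)
        qed
      qed
      have lay: "w i < w j" if "i\<in>{1..n}" "j\<in>{1..n}" "g i = g j" "z i < z j" for i j
        using that zi by simp
      obtain y where y: "y \<in> Sn n" "rel n g w y" "\<forall>i\<in>{1..n}. ?bk (y i) = z i"
        using construct_y[OF a w fib lay rel_refl] by blast
      have "z = restrict (\<lambda>i. ?bk (y i)) {1..n}"
      proof
        fix i show "z i = restrict (\<lambda>i. ?bk (y i)) {1..n} i"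
          using y(3) z unfolding \<Phi>_def by (cases "i \<in> {1..n}") auto
      qed
      hence "z \<in> Zset n \<alpha> g w" unfolding Zset_def using y(1,2) by (intro image_eqI[where x = y]) simp_all
      moreover have "\<forall>i\<in>{1..n}. \<forall>j\<in>{1..n}. g i = g j \<longrightarrow> z i = z j" using zi by simp
      ultimately show "z \<in> Z0 n \<alpha> g w" unfolding Z0_def mem_Collect_eq by (rule conjI)
    next
      fix z assume zZ: "z \<in> Z0 n \<alpha> g w"
      hence cst: "\<forall>i\<in>{1..n}. \<forall>j\<in>{1..n}. g i = g j \<longrightarrow> z i = z j" and zZs: "z \<in> Zset n \<alpha> g w"
        unfolding Z0_def mem_Collect_eq by (rule conjunct2, rule conjunct1)
      obtain y where y: "y \<in> Sn n" "rel n g w y" and z: "z = restrict (\<lambda>i. ?bk (y i)) {1..n}"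
        using zZs unfolding Zset_def by (auto elim!: imageE)
      define pick where "pick k = (SOME i. i \<in> {1..n} \<and> g i = k)" for k
      have pick: "pick k \<in> {1..n} \<and> g (pick k) = k" if "k < length \<beta>" for k
        unfolding pick_def using gsurj[OF that] by (metis (mono_tags, lifting) someI_ex)
      define f where "f = restrict (\<lambda>k. z (pick k)) {0..<length \<beta>}"
      have fg: "f (g i) = z i" if i: "i \<in> {1..n}" for i
      proof -
        have "g i < length \<beta>" using gl[OF i] .
        hence p: "pick (g i) \<in> {1..n} \<and> g (pick (g i)) = g i" by (rule pick)
        have "f (g i) = z (pick (g i))" unfolding f_def using \<open>g i < length \<beta>\<close> by simp
        moreover have "z (pick (g i)) = z i" using cst p i by blast
        ultimately show ?thesis by simp
      qed
      have Pz: "\<Phi> f = z"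
      proof
        fix i show "\<Phi> f i = z i" using fg z unfolding \<Phi>_def by (cases "i \<in> {1..n}") auto
      qed
      have fE1: "f \<in> {0..<length \<beta>} \<rightarrow>\<^sub>E {0..<length \<alpha>}"
      proof (rule PiE_I)
        fix k assume "k \<in> {0..<length \<beta>}"
        hence k: "k < length \<beta>" by simp
        have "y (pick k) \<in> {1..n}" using Sn_range[OF y(1)] pick[OF k] by blast
        hence "?bk (y (pick k)) < length \<alpha>" using blk_lt_len[OF a] by blast
        thus "f k \<in> {0..<length \<alpha>}" using k pick[OF k] z unfolding f_def by simp
      next
        fix k assume "k \<notin> {0..<length \<beta>}" thus "f k = undefined" unfolding f_def by simp
      qed
      have fE2: "\<alpha> ! j = (\<Sum>k\<in>{k. k < length \<beta> \<and> f k = j}. \<beta> ! k)" if j: "j < length \<alpha>" for j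
      proof -
        have "\<alpha> ! j = card {c\<in>{1..n}. ?bk c = j}" using card_blk_fiber[OF a j] by simp
        also have "\<dots> = card {i\<in>{1..n}. ?bk (y i) = j}" by (rule fiber_perm_card[OF y(1), symmetric])
        also have "{i\<in>{1..n}. ?bk (y i) = j} = {i\<in>{1..n}. f (g i) = j}" using fg z by auto
        also have "card \<dots> = (\<Sum>k\<in>{k. k < length \<beta> \<and> f k = j}. \<beta> ! k)" by (rule sumfib)
        finally show ?thesis .
      qed
      have "f \<in> E" unfolding E_def mem_Collect_eq using fE1 fE2 by (intro conjI allI impI) auto
      thus "z \<in> \<Phi> ` E" using Pz by blast
    qed
  qed
  hence "card (Z0 n \<alpha> g w) = card E" by (simp add: bij_betw_same_card)
  moreover have "eta \<beta> \<alpha> = card E" unfolding eta_def E_def by (rule refl)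
  ultimately show ?thesis unfolding geq \<beta>_def by simp
qed

definition spanP :: "nat \<Rightarrow> nat \<Rightarrow> ((nat \<Rightarrow> nat) \<Rightarrow> 'k::comm_ring_1) \<Rightarrow> bool" where
  "spanP n m X \<longleftrightarrow> (\<exists>c. X = (\<lambda>v. \<Sum>u\<in>Sn n. c u * lrm_basis n u v) \<and> (\<forall>u\<in>Sn n. c u \<noteq> 0 \<longrightarrow> m \<le> card (LRM n u)))"

lemma spanP_zero: "spanP n m (\<lambda>v. 0)"
  unfolding spanP_def by (rule exI[of _ "\<lambda>_. 0"]) simp

lemma spanP_add:
  assumes "spanP n m X" "spanP n m Y"
  shows "spanP n m (\<lambda>v. X v + Y v)"
proof -
  obtain c1 where c1: "X = (\<lambda>v. \<Sum>u\<in>Sn n. c1 u * lrm_basis n u v)" "\<forall>u\<in>Sn n. c1 u \<noteq> 0 \<longrightarrow> m \<le> card (LRM n u)"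
    using assms(1) unfolding spanP_def by blast
  obtain c2 where c2: "Y = (\<lambda>v. \<Sum>u\<in>Sn n. c2 u * lrm_basis n u v)" "\<forall>u\<in>Sn n. c2 u \<noteq> 0 \<longrightarrow> m \<le> card (LRM n u)"
    using assms(2) unfolding spanP_def by blast
  show ?thesis unfolding spanP_def
  proof (intro exI[of _ "\<lambda>u. c1 u + c2 u"] conjI)
    show "(\<lambda>v. X v + Y v) = (\<lambda>v. \<Sum>u\<in>Sn n. (c1 u + c2 u) * lrm_basis n u v)"
      unfolding c1(1) c2(1) by (simp add: distrib_right sum.distrib)
    show "\<forall>u\<in>Sn n. c1 u + c2 u \<noteq> 0 \<longrightarrow> m \<le> card (LRM n u)"
      using c1(2) c2(2) by force
  qed
qed

lemma spanP_scale:
  assumes "spanP n m X"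
  shows "spanP n m (\<lambda>v. r * X v)"
proof -
  obtain c1 where c1: "X = (\<lambda>v. \<Sum>u\<in>Sn n. c1 u * lrm_basis n u v)" "\<forall>u\<in>Sn n. c1 u \<noteq> 0 \<longrightarrow> m \<le> card (LRM n u)"
    using assms(1) unfolding spanP_def by blast
  show ?thesis unfolding spanP_def
  proof (intro exI[of _ "\<lambda>u. r * c1 u"] conjI)
    show "(\<lambda>v. r * X v) = (\<lambda>v. \<Sum>u\<in>Sn n. (r * c1 u) * lrm_basis n u v)"
      unfolding c1(1) by (simp add: sum_distrib_left mult.assoc)
    show "\<forall>u\<in>Sn n. r * c1 u \<noteq> 0 \<longrightarrow> m \<le> card (LRM n u)"
      using c1(2) by force
  qed
qed

lemma spanP_diff:
  assumes "spanP n m X" "spanP n m Y"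
  shows "spanP n m (\<lambda>v. X v - Y v)"
proof -
  have "spanP n m (\<lambda>v. X v + (- 1) * Y v)" by (rule spanP_add[OF assms(1) spanP_scale[OF assms(2)]])
  thus ?thesis by simp
qed

lemma spanP_mono:
  assumes "spanP n m X" "m' \<le> m"
  shows "spanP n m' X"
  using assms unfolding spanP_def by force

lemma spanP_sum:
  assumes "\<And>a. a \<in> A \<Longrightarrow> spanP n m (F a)"
  shows "spanP n m (\<lambda>v. \<Sum>a\<in>A. F a v)"
proof (cases "finite A")
  case True
  thus ?thesis using assms
  proof (induction A rule: finite_induct)
    case empty thus ?case using spanP_zero by simp
  next
    case (insert a A)
    have "spanP n m (\<lambda>v. F a v + (\<Sum>a\<in>A. F a v))"
      using insert by (intro spanP_add) auto
    thus ?case using insert by simp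
  qed
next
  case False thus ?thesis using spanP_zero by simp
qed

lemma spanP_basis:
  assumes "u \<in> Sn n" "m \<le> card (LRM n u)"
  shows "spanP n m (lrm_basis n u :: (nat \<Rightarrow> nat) \<Rightarrow> 'k::comm_ring_1)"
  unfolding spanP_def
proof (intro exI[of _ "\<lambda>u'. if u' = u then 1 else 0"] conjI)
  show "(lrm_basis n u :: (nat \<Rightarrow> nat) \<Rightarrow> 'k) = (\<lambda>v. \<Sum>u'\<in>Sn n. (if u' = u then 1 else 0) * lrm_basis n u' v)"
  proof
    fix v
    have "(\<Sum>u'\<in>Sn n. (if u' = u then 1 else 0) * (lrm_basis n u' v :: 'k)) = (\<Sum>u'\<in>Sn n. if u' = u then lrm_basis n u' v else 0)"
      by (rule sum.cong) auto
    also have "\<dots> = lrm_basis n u v" using assms(1) finite_Sn by (simp add: sum.delta)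
    finally show "(lrm_basis n u v :: 'k) = (\<Sum>u'\<in>Sn n. (if u' = u then 1 else 0) * lrm_basis n u' v)" by simp
  qed
  show "\<forall>u'\<in>Sn n. (if u' = u then 1 else (0::'k)) \<noteq> 0 \<longrightarrow> m \<le> card (LRM n u')"
    using assms(2) by simp
qed

lemma sat_span:
  fixes g :: "nat \<Rightarrow> nat"
  assumes "X \<subseteq> Sn n"
    and "\<And>x. x \<in> X \<Longrightarrow> spanP n m (Sg n g x :: (nat \<Rightarrow> nat) \<Rightarrow> 'k::comm_ring_1)"
    and "\<And>x y. x \<in> X \<Longrightarrow> y \<in> Sn n \<Longrightarrow> rel n g x y \<Longrightarrow> y \<in> X"
  shows "spanP n m (\<lambda>v. if v \<in> X then (1::'k) else 0)"
  using assms
proof (induction "card X" arbitrary: X rule: less_induct)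
  case less
  show ?case
  proof (cases "X = {}")
    case True thus ?thesis using spanP_zero by simp
  next
    case False
    then obtain x where x: "x \<in> X" by blast
    define C where "C = {y\<in>Sn n. rel n g x y}"
    have CX: "C \<subseteq> X" using less.prems(3) x C_def by blast
    have xC: "x \<in> C" using x less.prems(1) rel_refl C_def by blast
    have finX: "finite X" using less.prems(1) finite_Sn finite_subset by blast
    have lt: "card (X - C) < card X" by (rule psubset_card_mono[OF finX]) (use xC x in blast)
    have sX: "spanP n m (\<lambda>v. if v \<in> X - C then (1::'k) else 0)"
    proof (rule less.hyps[OF lt])
      show "X - C \<subseteq> Sn n" using less.prems(1) by blast
      show "\<And>y. y \<in> X - C \<Longrightarrow> spanP n m (Sg n g y :: (nat \<Rightarrow> nat) \<Rightarrow> 'k)" using less.prems(2) by blast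
      show "\<And>y y'. y \<in> X - C \<Longrightarrow> y' \<in> Sn n \<Longrightarrow> rel n g y y' \<Longrightarrow> y' \<in> X - C"
      proof -
        fix y y' assume y: "y \<in> X - C" and y': "y' \<in> Sn n" and r: "rel n g y y'"
        have "y' \<in> X" using less.prems(3) y y' r by blast
        moreover have "y' \<notin> C"
        proof
          assume "y' \<in> C"
          hence "rel n g x y'" unfolding C_def by blast
          hence "rel n g x y" using r rel_sym rel_trans by blast
          hence "y \<in> C" using y less.prems(1) unfolding C_def by blast
          thus False using y by blast
        qed
        ultimately show "y' \<in> X - C" by blast
      qed
    qed
    have sx: "spanP n m (Sg n g x :: (nat \<Rightarrow> nat) \<Rightarrow> 'k)" using less.prems(2) x by blast
    have eq: "(\<lambda>v. if v \<in> X then (1::'k) else 0) = (\<lambda>v. Sg n g x v + (if v \<in> X - C then 1 else 0))"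
    proof
      fix v show "(if v \<in> X then (1::'k) else 0) = Sg n g x v + (if v \<in> X - C then 1 else 0)"
      proof (cases "v \<in> C")
        case True
        hence "Sg n g x v = (1::'k)" unfolding Sg_def C_def by simp
        thus ?thesis using True CX by auto
      next
        case False
        hence "Sg n g x v = (0::'k)" unfolding Sg_def C_def by auto
        thus ?thesis using False by auto
      qed
    qed
    show ?thesis unfolding eq by (rule spanP_add[OF sx sX])
  qed
qed

lemma blk_LRM_eq:
  assumes "1 \<le> a" "a \<le> b"
  shows "blkI (LRM' n w) a = blkI (LRM' n w) b \<longleftrightarrow> \<not> (\<exists>l\<in>LRM n w. a < l \<and> l \<le> b)"
proof -
  have "(\<exists>t\<in>LRM' n w. a \<le> t \<and> t < b) \<longleftrightarrow> (\<exists>l\<in>LRM n w. a < l \<and> l \<le> b)"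
  proof
    assume "\<exists>t\<in>LRM' n w. a \<le> t \<and> t < b"
    then obtain t where t: "t \<in> LRM' n w" "a \<le> t" "t < b" by blast
    then obtain l where l: "l \<in> LRM n w" "l > 1" "t = l - 1" unfolding LRM'_def by blast
    thus "\<exists>l\<in>LRM n w. a < l \<and> l \<le> b" using t by (intro bexI[of _ l]) auto
  next
    assume "\<exists>l\<in>LRM n w. a < l \<and> l \<le> b"
    then obtain l where l: "l \<in> LRM n w" "a < l" "l \<le> b" by blast
    hence "l - 1 \<in> LRM' n w" using assms unfolding LRM'_def by auto
    thus "\<exists>t\<in>LRM' n w. a \<le> t \<and> t < b" using l by (intro bexI[of _ "l - 1"]) auto
  qed
  note ee = this
  show ?thesis unfolding blkI_eq_iff[OF finite_LRM'[of n w] assms(2)] ee by (rule refl)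
qed

lemma kernel_card:
  assumes "\<And>i j. i \<in> A \<Longrightarrow> j \<in> A \<Longrightarrow> g i = g j \<longleftrightarrow> h i = h j"
  shows "card (g ` A) = card (h ` A)"
proof -
  define \<phi> where "\<phi> l = h (SOME i. i \<in> A \<and> g i = l)" for l
  have phi: "\<phi> (g i) = h i" if "i \<in> A" for i
  proof -
    have "\<exists>i'. i' \<in> A \<and> g i' = g i" using that by blast
    hence "(SOME i'. i' \<in> A \<and> g i' = g i) \<in> A \<and> g (SOME i'. i' \<in> A \<and> g i' = g i) = g i"
      by (rule someI_ex)
    thus ?thesis unfolding \<phi>_def using assms that by blast
  qed
  have img: "h ` A = \<phi> ` (g ` A)"
    using phi by (auto simp: image_image intro!: image_cong)
  have "inj_on \<phi> (g ` A)"
  proof (rule inj_onI)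
    fix a b assume "a \<in> g ` A" "b \<in> g ` A" "\<phi> a = \<phi> b"
    then obtain i j where "i \<in> A" "j \<in> A" "a = g i" "b = g j" "\<phi> (g i) = \<phi> (g j)" by blast
    thus "a = b" using phi assms by metis
  qed
  thus ?thesis unfolding img by (simp add: card_image)
qed

definition mu :: "nat \<Rightarrow> (nat \<Rightarrow> nat) \<Rightarrow> (nat \<Rightarrow> nat) \<Rightarrow> nat" where
  "mu n g v = card {(i,j). i\<in>{1..n} \<and> j\<in>{1..n} \<and> g j = g i \<and> v j < v i \<and> (\<forall>k\<in>{1..n}. g k = g i \<longrightarrow> i \<le> k)}"

lemma finite_mu_set: fixes n :: nat shows "finite {(i,j). i\<in>{1..n} \<and> j\<in>{1..n} \<and> P i j}"
proof (rule finite_subset[of _ "{1..n} \<times> {1..n}"])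
  show "finite ({1..n} \<times> {1..n})" by simp
qed auto

lemma base_case:
  fixes g :: "nat \<Rightarrow> nat"
  assumes v: "v \<in> Sn n" and m0: "mu n g v = 0"
  shows "\<exists>u\<in>Sn n. (lrm_basis n u :: (nat \<Rightarrow> nat) \<Rightarrow> 'k::comm_ring_1) = Sg n g v \<and> nb n g \<le> card (LRM n u)"
proof -
  have emp: "{(i,j). i\<in>{1..n} \<and> j\<in>{1..n} \<and> g j = g i \<and> v j < v i \<and> (\<forall>k\<in>{1..n}. g k = g i \<longrightarrow> i \<le> k)} = {}"
  proof -
    have fin: "finite {(i,j). i\<in>{1..n} \<and> j\<in>{1..n} \<and> g j = g i \<and> v j < v i \<and> (\<forall>k\<in>{1..n}. g k = g i \<longrightarrow> i \<le> k)}"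
      by (rule finite_mu_set)
    have "card {(i,j). i\<in>{1..n} \<and> j\<in>{1..n} \<and> g j = g i \<and> v j < v i \<and> (\<forall>k\<in>{1..n}. g k = g i \<longrightarrow> i \<le> k)} = 0"
      using m0 unfolding mu_def .
    thus ?thesis by (rule iffD1[OF card_0_eq[OF fin]])
  qed
  have nopair: "\<not> v j < v i" if "i\<in>{1..n}" "j\<in>{1..n}" "g j = g i" "\<forall>k\<in>{1..n}. g k = g i \<longrightarrow> i \<le> k" for i j
  proof
    assume "v j < v i"
    hence "(i,j) \<in> {(i,j). i\<in>{1..n} \<and> j\<in>{1..n} \<and> g j = g i \<and> v j < v i \<and> (\<forall>k\<in>{1..n}. g k = g i \<longrightarrow> i \<le> k)}"
      using that by simp
    thus False using emp by blast
  qed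
  define B where "B i = {k\<in>{1..n}. g k = g i}" for i
  define f where "f i = Min (B i)" for i
  have finB: "finite (B i)" for i unfolding B_def by simp
  have fB: "f i \<in> B i \<and> (\<forall>k\<in>B i. f i \<le> k)" if i: "i \<in> {1..n}" for i
  proof -
    have "i \<in> B i" using i unfolding B_def by simp
    hence ne: "B i \<noteq> {}" by blast
    show ?thesis unfolding f_def using Min_in[OF finB ne] Min_le[OF finB] by blast
  qed
  have fg: "f i \<in> {1..n} \<and> g (f i) = g i" if i: "i \<in> {1..n}" for i
    using fB[OF i] unfolding B_def by simp
  have fle: "f i \<le> i" if i: "i \<in> {1..n}" for i
    using fB[OF i] i unfolding B_def by simp
  have Bf: "B (f i) = B i" if i: "i \<in> {1..n}" for i
    using fg[OF i] unfolding B_def by simp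
  have ff: "f (f i) = f i" if i: "i \<in> {1..n}" for i
    using Bf[OF i] unfolding f_def by simp
  have feq: "f i = f j \<longleftrightarrow> g i = g j" if i: "i \<in> {1..n}" and j: "j \<in> {1..n}" for i j
  proof
    assume "f i = f j" thus "g i = g j" using fg[OF i] fg[OF j] by metis
  next
    assume "g i = g j" hence "B i = B j" unfolding B_def by simp
    thus "f i = f j" unfolding f_def by simp
  qed
  have vmin: "v (f i) \<le> v j" if i: "i \<in> {1..n}" and j: "j \<in> B i" for i j
  proof -
    have "f i \<in> {1..n}" "g (f i) = g i" using fg[OF i] by auto
    moreover have "\<forall>k\<in>{1..n}. g k = g (f i) \<longrightarrow> f i \<le> k" using fB[OF i] fg[OF i] unfolding B_def by simp
    moreover have "j \<in> {1..n}" "g j = g (f i)" using j fg[OF i] unfolding B_def by auto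
    ultimately have "\<not> v j < v (f i)" using nopair by blast
    thus ?thesis by simp
  qed
  define c where "c i = card {k\<in>{1..n}. f i < f k}" for i
  define rk where "rk i = card {k\<in>B i. v k \<le> v i}" for i
  define u where "u i = (if i \<in> {1..n} then c i + rk i else i)" for i
  have vinj: "v i = v j \<Longrightarrow> i = j" for i j using Sn_inj[OF v] by (meson injD)
  have rk1: "1 \<le> rk i \<and> rk i \<le> card (B i)" if i: "i \<in> {1..n}" for i
  proof -
    have "i \<in> {k\<in>B i. v k \<le> v i}" using i unfolding B_def by simp
    hence "0 < rk i" unfolding rk_def using finB by (metis (no_types, lifting) card_gt_0_iff empty_iff finite_subset mem_Collect_eq subsetI)
    moreover have "rk i \<le> card (B i)" unfolding rk_def using finB by (intro card_mono) auto
    ultimately show ?thesis by simp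
  qed
  have cB: "c i' + card (B i') \<le> c i" if i: "i \<in> {1..n}" and i': "i' \<in> {1..n}" and lt: "f i < f i'" for i i'
  proof -
    have d: "{k\<in>{1..n}. f i' < f k} \<inter> B i' = {}"
    proof -
      have "f k = f i'" if "k \<in> B i'" for k using that feq[OF _ i'] unfolding B_def by auto
      thus ?thesis by fastforce
    qed
    have s: "{k\<in>{1..n}. f i' < f k} \<union> B i' \<subseteq> {k\<in>{1..n}. f i < f k}"
    proof -
      have "f k = f i'" if "k \<in> B i'" for k using that feq[OF _ i'] unfolding B_def by auto
      thus ?thesis using lt unfolding B_def by auto
    qed
    have "c i' + card (B i') = card ({k\<in>{1..n}. f i' < f k} \<union> B i')"
      unfolding c_def using d finB by (simp add: card_Un_disjoint)
    also have "\<dots> \<le> c i" unfolding c_def by (rule card_mono[OF _ s]) simp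
    finally show ?thesis .
  qed
  have ugt: "u i' < u i" if i: "i \<in> {1..n}" and i': "i' \<in> {1..n}" and lt: "f i < f i'" for i i'
    using cB[OF i i' lt] rk1[OF i] rk1[OF i'] i i' unfolding u_def by simp
  have ule: "1 \<le> u i \<and> u i \<le> n" if i: "i \<in> {1..n}" for i
  proof -
    have d: "{k\<in>{1..n}. f i < f k} \<inter> B i = {}"
    proof -
      have "f k = f i" if "k \<in> B i" for k using that feq[OF _ i] unfolding B_def by auto
      thus ?thesis by fastforce
    qed
    have "c i + card (B i) = card ({k\<in>{1..n}. f i < f k} \<union> B i)"
      unfolding c_def using d finB by (simp add: card_Un_disjoint)
    also have "\<dots> \<le> card {1..n}" by (rule card_mono) (auto simp: B_def)
    finally show ?thesis using rk1[OF i] i unfolding u_def by simp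
  qed
  have rk_mono: "rk i < rk j" if i: "i \<in> {1..n}" and j: "j \<in> {1..n}" and gg: "g i = g j" and lt: "v i < v j" for i j
  proof -
    have "B i = B j" using gg unfolding B_def by simp
    hence sub: "{k\<in>B i. v k \<le> v i} \<subseteq> {k\<in>B j. v k \<le> v j}" using lt by auto
    have "j \<in> {k\<in>B j. v k \<le> v j}" "j \<notin> {k\<in>B i. v k \<le> v i}" using j lt \<open>B i = B j\<close> by (auto simp: B_def)
    hence "{k\<in>B i. v k \<le> v i} \<subset> {k\<in>B j. v k \<le> v j}" using sub by blast
    thus ?thesis unfolding rk_def by (rule psubset_card_mono[rotated]) (simp add: finB)
  qed
  have usame: "u i < u j \<longleftrightarrow> v i < v j" if i: "i \<in> {1..n}" and j: "j \<in> {1..n}" and gg: "g i = g j" for i j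
  proof -
    have ce: "c i = c j" using feq[OF i j] gg unfolding c_def by simp
    have "rk i < rk j \<longleftrightarrow> v i < v j"
    proof
      assume h: "rk i < rk j"
      show "v i < v j"
      proof (rule ccontr)
        assume "\<not> v i < v j"
        hence "v j < v i \<or> i = j" using vinj by (metis nat_neq_iff)
        thus False using rk_mono[OF j i gg[symmetric]] h by auto
      qed
    qed (rule rk_mono[OF i j gg])
    thus ?thesis using ce i j unfolding u_def by simp
  qed
  have uinj: "inj_on u {1..n}"
  proof (rule inj_onI)
    fix i j assume i: "i \<in> {1..n}" and j: "j \<in> {1..n}" and e: "u i = u j"
    show "i = j"
    proof (cases "g i = g j")
      case True
      have "\<not> v i < v j" "\<not> v j < v i" using usame[OF i j True] usame[OF j i True[symmetric]] e by auto
      thus ?thesis using vinj by (metis nat_neq_iff)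
    next
      case False
      hence "f i \<noteq> f j" using feq[OF i j] by simp
      hence "f i < f j \<or> f j < f i" by auto
      thus ?thesis using ugt[OF i j] ugt[OF j i] e by auto
    qed
  qed
  have uimg: "u ` {1..n} = {1..n}"
    by (rule endo_inj_surj) (use ule uinj in auto)
  have uS: "u \<in> Sn n"
    unfolding Sn_def using uinj uimg
    by (auto intro!: bij_imp_permutes simp: bij_betw_def u_def)
  have uf: "u (f i) = c i + 1" if i: "i \<in> {1..n}" for i
  proof -
    have fi: "f i \<in> {1..n}" using fg[OF i] by simp
    have "{k\<in>B (f i). v k \<le> v (f i)} = {f i}"
    proof (rule set_eqI, rule iffI)
      fix k assume "k \<in> {k\<in>B (f i). v k \<le> v (f i)}"
      hence k: "k \<in> B i" "v k \<le> v (f i)" using Bf[OF i] by auto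
      hence "v k = v (f i)" using vmin[OF i k(1)] by simp
      thus "k \<in> {f i}" using vinj by simp
    next
      fix k assume "k \<in> {f i}"
      thus "k \<in> {k\<in>B (f i). v k \<le> v (f i)}" using fB[OF i] Bf[OF i] by simp
    qed
    hence "rk (f i) = 1" unfolding rk_def by simp
    moreover have "c (f i) = c i" unfolding c_def using ff[OF i] by simp
    ultimately show ?thesis using fi unfolding u_def by simp
  qed
  have uinv: "inv u (u k) = k" for k using Sn_inv_app[OF uS] by simp
  have uLRM: "u (f i) \<in> LRM n u" if i: "i \<in> {1..n}" for i
  proof -
    have fi: "f i \<in> {1..n}" using fg[OF i] by simp
    have "u (f i) \<in> {1..n}" using ule[OF fi] by simp
    moreover have "u k > u (f i)" if k: "1 \<le> k \<and> k < inv u (u (f i))" for k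
    proof -
      have kl: "k < f i" using k uinv by simp
      hence kn: "k \<in> {1..n}" using k fi by simp
      have "f k \<le> k" by (rule fle[OF kn])
      hence "f k < f (f i)" using kl ff[OF i] by simp
      thus ?thesis using ugt[OF kn fi] by simp
    qed
    ultimately show ?thesis unfolding LRM_def by blast
  qed
  have LRMu: "\<exists>i\<in>{1..n}. l = u (f i)" if l: "l \<in> LRM n u" for l
  proof -
    have ln: "l \<in> {1..n}" using l LRM_sub by blast
    define p where "p = inv u l"
    have pn: "p \<in> {1..n}" unfolding p_def using Sn_range[OF Sn_inv[OF uS] ln] .
    have up: "u p = l" unfolding p_def using Sn_inv_app[OF uS] by simp
    have "f p = p"
    proof (rule ccontr)
      assume "f p \<noteq> p"
      hence lt: "f p < p" using fle[OF pn] by simp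
      have fp: "f p \<in> {1..n}" using fg[OF pn] by simp
      have "1 \<le> f p \<and> f p < inv u l" using lt fp p_def by simp
      hence "u (f p) > l" using l unfolding LRM_def by blast
      moreover have "u (f p) = c p + 1" by (rule uf[OF pn])
      moreover have "u p = c p + rk p" using pn unfolding u_def by simp
      ultimately show False using rk1[OF pn] up by simp
    qed
    thus ?thesis using pn up by metis
  qed
  have aux: "(\<not> (\<exists>l\<in>LRM n u. u i < l \<and> l \<le> u j)) \<longleftrightarrow> g i = g j"
    if i: "i \<in> {1..n}" and j: "j \<in> {1..n}" and le: "u i \<le> u j" for i j
  proof
    assume nl: "\<not> (\<exists>l\<in>LRM n u. u i < l \<and> l \<le> u j)"
    show "g i = g j"
    proof (rule ccontr)
      assume gne: "g i \<noteq> g j"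
      hence "f i \<noteq> f j" using feq[OF i j] by simp
      moreover have "\<not> f i < f j" using ugt[OF i j] le by auto
      ultimately have fl: "f j < f i" by simp
      have fj: "f j \<in> {1..n}" using fg[OF j] by simp
      have "c i + card (B i) \<le> c j" by (rule cB[OF j i fl])
      hence "u i < u (f j)" using uf[OF j] rk1[OF i] i unfolding u_def by simp
      moreover have "u (f j) \<le> u j" using uf[OF j] rk1[OF j] j unfolding u_def by simp
      ultimately show False using nl uLRM[OF j] by blast
    qed
  next
    assume gg: "g i = g j"
    show "\<not> (\<exists>l\<in>LRM n u. u i < l \<and> l \<le> u j)"
    proof
      assume "\<exists>l\<in>LRM n u. u i < l \<and> l \<le> u j"
      then obtain l where l: "l \<in> LRM n u" "u i < l" "l \<le> u j" by blast
      then obtain k where k: "k \<in> {1..n}" "l = u (f k)" using LRMu by blast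
      have fk: "f k \<in> {1..n}" using fg[OF k(1)] by simp
      have ce: "c i = c j" using feq[OF i j] gg unfolding c_def by simp
      have Be: "B i = B j" using gg unfolding B_def by simp
      have ulk: "u (f k) = c k + 1" by (rule uf[OF k(1)])
      have h1: "c i < c k" using l(2) k(2) ulk rk1[OF i] i unfolding u_def by simp
      have h2: "c k < c i + card (B i)" using l(3) k(2) ulk rk1[OF j] j ce Be unfolding u_def by simp
      show False
      proof (cases "f k < f i")
        case True
        have "c i + card (B i) \<le> c k" by (rule cB[OF k(1) i True])
        thus False using h2 by simp
      next
        case False
        show False
        proof (cases "f i < f k")
          case True
          have "c k + card (B k) \<le> c i" by (rule cB[OF i k(1) True])
          thus False using h1 by simp
        next
          case False
          hence "f i = f k" using \<open>\<not> f k < f i\<close> by simp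
          hence "c i = c k" unfolding c_def by simp
          thus False using h1 by simp
        qed
      qed
    qed
  qed
  have blkeq: "blkI (LRM' n u) (u i) = blkI (LRM' n u) (u j) \<longleftrightarrow> g i = g j"
    if i: "i \<in> {1..n}" and j: "j \<in> {1..n}" for i j
  proof (cases "u i \<le> u j")
    case True
    thus ?thesis using blk_LRM_eq[of "u i" "u j" n u] ule[OF i] aux[OF i j True] by simp
  next
    case False
    hence le: "u j \<le> u i" by simp
    thus ?thesis using blk_LRM_eq[of "u j" "u i" n u] ule[OF j] aux[OF j i le] by (metis)
  qed
  have rvu: "rel n g v u" unfolding rel_def using usame by blast
  have "(lrm_basis n u :: (nat \<Rightarrow> nat) \<Rightarrow> 'k) = Sg n (\<lambda>i. blkI (LRM' n u) (u i)) u"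
    by (rule lrm_basis_Sg[OF uS])
  also have "\<dots> = Sg n g u" by (rule Sg_cong) (use blkeq in blast)
  also have "\<dots> = Sg n g v"
  proof
    fix x
    have "rel n g u x \<longleftrightarrow> rel n g v x" using rvu rel_sym rel_trans by blast
    thus "(Sg n g u x :: 'k) = Sg n g v x" unfolding Sg_def by simp
  qed
  finally have e: "(lrm_basis n u :: (nat \<Rightarrow> nat) \<Rightarrow> 'k) = Sg n g v" .
  have "nb n g = card ((\<lambda>i. u (f i)) ` {1..n})"
    unfolding nb_def
  proof (rule kernel_card)
    fix i j assume i: "i \<in> {1..n}" and j: "j \<in> {1..n}"
    have "u (f i) = u (f j) \<longleftrightarrow> f i = f j"
    proof
      assume "u (f i) = u (f j)" thus "f i = f j" using uinj fg[OF i] fg[OF j] inj_onD by metis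
    qed simp
    thus "g i = g j \<longleftrightarrow> u (f i) = u (f j)" using feq[OF i j] by simp
  qed
  also have "\<dots> \<le> card (LRM n u)" by (rule card_mono[OF finite_LRM]) (use uLRM in blast)
  finally show ?thesis using e uS by blast
qed

definition pairs :: "nat \<Rightarrow> (nat \<Rightarrow> nat) \<Rightarrow> (nat \<Rightarrow> nat) \<Rightarrow> (nat \<times> nat) set" where
  "pairs n g v = {(i,j). i\<in>{1..n} \<and> j\<in>{1..n} \<and> g j = g i \<and> v j < v i \<and> (\<forall>k\<in>{1..n}. g k = g i \<longrightarrow> i \<le> k)}"

lemma mu_pairs: "mu n g v = card (pairs n g v)" unfolding mu_def pairs_def by (rule refl)

lemma finite_pairs: "finite (pairs n g v)" unfolding pairs_def by (rule finite_mu_set)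

lemma pairsI: "i\<in>{1..n} \<Longrightarrow> j\<in>{1..n} \<Longrightarrow> g j = g i \<Longrightarrow> v j < v i \<Longrightarrow> (\<forall>k\<in>{1..n}. g k = g i \<longrightarrow> i \<le> k) \<Longrightarrow> (i,j) \<in> pairs n g v"
  unfolding pairs_def by simp

lemma pairsD: "(i,j) \<in> pairs n g v \<Longrightarrow> i\<in>{1..n} \<and> j\<in>{1..n} \<and> g j = g i \<and> v j < v i \<and> (\<forall>k\<in>{1..n}. g k = g i \<longrightarrow> i \<le> k)"
  unfolding pairs_def by simp

lemma rel_refine:
  assumes "\<And>i j. i\<in>{1..n} \<Longrightarrow> j\<in>{1..n} \<Longrightarrow> g' i = g' j \<Longrightarrow> g i = g j"
  shows "rel n g v x \<Longrightarrow> rel n g' v x"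
  using assms unfolding rel_def by blast

lemma step_case:
  fixes g :: "nat \<Rightarrow> nat"
  assumes v: "v \<in> Sn n" and ne: "pairs n g v \<noteq> {}"
  shows "\<exists>g'. nb n g < nb n g' \<and> mu n g' v < mu n g v \<and>
     (\<exists>R. R \<subseteq> Sn n \<and> (\<forall>x\<in>R. mu n g x < mu n g v) \<and> (\<forall>x y. x \<in> R \<longrightarrow> y \<in> Sn n \<longrightarrow> rel n g x y \<longrightarrow> y \<in> R)
       \<and> (\<forall>x. (Sg n g v x :: 'k::comm_ring_1) = Sg n g' v x - (if x \<in> R then 1 else 0)))"
proof -
  obtain i0 j0 where p0: "(i0, j0) \<in> pairs n g v" using ne by auto
  have i0: "i0 \<in> {1..n}" and j0: "j0 \<in> {1..n}" and gj0: "g j0 = g i0" and vj0: "v j0 < v i0"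
    and first0: "\<forall>k\<in>{1..n}. g k = g i0 \<longrightarrow> i0 \<le> k" using pairsD[OF p0] by auto
  define Y where "Y = {k\<in>{1..n}. g k = g i0 \<and> v k < v i0}"
  have j0Y: "j0 \<in> Y" using j0 gj0 vj0 unfolding Y_def by simp
  have i0Y: "i0 \<notin> Y" unfolding Y_def by simp
  have finY: "finite Y" unfolding Y_def by simp
  define y1 where "y1 = Min Y"
  have y1Y: "y1 \<in> Y" unfolding y1_def using Min_in[OF finY] j0Y by blast
  have y1le: "y1 \<le> k" if "k \<in> Y" for k unfolding y1_def using Min_le[OF finY that] .
  define F where "F = Max (g ` {1..n}) + 1"
  have gF: "g k \<noteq> F" if "k \<in> {1..n}" for k
  proof -
    have "g k \<le> Max (g ` {1..n})" using that by (intro Max_ge) auto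
    thus ?thesis unfolding F_def by simp
  qed
  define g' where "g' k = (if g k = g i0 \<and> v k < v i0 then F else g k)" for k
  have g'F: "g' k = F \<longleftrightarrow> k \<in> Y" if "k \<in> {1..n}" for k
    using gF[OF that] that unfolding g'_def Y_def by auto
  have g'nF: "g' k = g k" if "k \<in> {1..n}" "k \<notin> Y" for k
    using that unfolding g'_def Y_def by auto
  have ref: "g i = g j" if "i\<in>{1..n}" "j\<in>{1..n}" "g' i = g' j" for i j
  proof (cases "i \<in> Y")
    case True
    hence "j \<in> Y" using g'F that by metis
    thus ?thesis using True unfolding Y_def by simp
  next
    case False
    hence "j \<notin> Y" using g'F that by metis
    thus ?thesis using False g'nF that by metis
  qed
  have img: "g' ` {1..n} = insert F (g ` {1..n})"
  proof (rule set_eqI, rule iffI)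
    fix l assume "l \<in> g' ` {1..n}"
    then obtain k where k: "k \<in> {1..n}" "l = g' k" by blast
    thus "l \<in> insert F (g ` {1..n})" unfolding g'_def by auto
  next
    fix l assume l: "l \<in> insert F (g ` {1..n})"
    show "l \<in> g' ` {1..n}"
    proof (cases "l = F")
      case True thus ?thesis using g'F[OF j0] j0Y j0 by (metis image_eqI)
    next
      case False
      then obtain k where k: "k \<in> {1..n}" "l = g k" using l by blast
      show ?thesis
      proof (cases "k \<in> Y")
        case True
        hence "l = g' i0" using k g'nF[OF i0 i0Y] unfolding Y_def by simp
        thus ?thesis using i0 by blast
      next
        case False thus ?thesis using k g'nF by (metis image_eqI)
      qed
    qed
  qed
  have Fn: "F \<notin> g ` {1..n}" using gF by blast
  have nbg': "nb n g' = nb n g + 1" unfolding nb_def img using Fn by simp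
  have K: "g i \<noteq> g i0" if p: "(i,j) \<in> pairs n g' v" and nF: "g' i \<noteq> F" for i j
  proof
    assume gi: "g i = g i0"
    have pd: "i\<in>{1..n}" "j\<in>{1..n}" "g' j = g' i" "v j < v i" "\<forall>k\<in>{1..n}. g' k = g' i \<longrightarrow> i \<le> k"
      using pairsD[OF p] by auto
    have iY: "i \<notin> Y" using g'F[OF pd(1)] nF by simp
    have "g' i = g i" using g'nF[OF pd(1) iY] .
    moreover have "g' i0 = g i0" using g'nF[OF i0 i0Y] .
    ultimately have "g' i0 = g' i" using gi by simp
    hence "i \<le> i0" using pd(5) i0 by blast
    moreover have "i0 \<le> i" using first0 pd(1) gi by blast
    ultimately have ii: "i = i0" by simp
    have jY: "j \<notin> Y" using g'F[OF pd(2)] pd(3) nF by simp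
    have "g j = g i" using ref[OF pd(2) pd(1) pd(3)] .
    hence "\<not> v j < v i0" using jY pd(2) gi unfolding Y_def by simp
    thus False using pd(4) ii by simp
  qed
  define \<phi> where "\<phi> p = (if g' (fst p) = F then i0 else fst p, snd p)" for p :: "nat \<times> nat"
  have phiA: "\<phi> p \<in> pairs n g v - {(i0, y1)}" if p: "p \<in> pairs n g' v" for p
  proof -
    obtain i j where pij: "p = (i,j)" by (cases p)
    have pp: "(i,j) \<in> pairs n g' v" using p pij by simp
    have pd: "i\<in>{1..n}" "j\<in>{1..n}" "g' j = g' i" "v j < v i" "\<forall>k\<in>{1..n}. g' k = g' i \<longrightarrow> i \<le> k"
      using pairsD[OF pp] by auto
    show ?thesis
    proof (cases "g' i = F")
      case True
      have iY: "i \<in> Y" using g'F[OF pd(1)] True by simp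
      have jY: "j \<in> Y" using g'F[OF pd(2)] True pd(3) by simp
      have "(i0, j) \<in> pairs n g v" using jY i0 first0 unfolding Y_def by (intro pairsI) auto
      moreover have "j \<noteq> y1"
      proof
        assume jy: "j = y1"
        have "g' y1 = g' i" using g'F y1Y True Y_def by auto
        hence "i \<le> y1" using pd(5) y1Y unfolding Y_def by blast
        moreover have "y1 \<le> i" using y1le[OF iY] .
        ultimately show False using jy pd(4) by simp
      qed
      ultimately show ?thesis using pij True unfolding \<phi>_def by simp
    next
      case False
      have gi: "g i \<noteq> g i0" using K[OF pp False] .
      have gii: "g' i = g i" using g'nF[OF pd(1)] gi unfolding Y_def by simp
      have jY: "j \<notin> Y" using g'F[OF pd(2)] pd(3) False by simp
      have gjj: "g' j = g j" using g'nF[OF pd(2) jY] .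
      have "(i, j) \<in> pairs n g v"
      proof (rule pairsI[OF pd(1) pd(2)])
        show "g j = g i" using gii gjj pd(3) by simp
        show "v j < v i" by (rule pd(4))
        show "\<forall>k\<in>{1..n}. g k = g i \<longrightarrow> i \<le> k"
        proof (intro ballI impI)
          fix k assume k: "k \<in> {1..n}" and gk: "g k = g i"
          have "k \<notin> Y" using gk gi unfolding Y_def by simp
          hence "g' k = g' i" using g'nF[OF k] gk gii by simp
          thus "i \<le> k" using pd(5) k by blast
        qed
      qed
      moreover have "i \<noteq> i0" using gi by blast
      ultimately show ?thesis using pij False unfolding \<phi>_def by simp
    qed
  qed
  have phiinj: "inj_on \<phi> (pairs n g' v)"
  proof (rule inj_onI)
    fix p q assume p: "p \<in> pairs n g' v" and q: "q \<in> pairs n g' v" and e: "\<phi> p = \<phi> q"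
    obtain i j where pij: "p = (i,j)" by (cases p)
    obtain i' j' where qij: "q = (i',j')" by (cases q)
    have pp: "(i,j) \<in> pairs n g' v" using p pij by simp
    have qq: "(i',j') \<in> pairs n g' v" using q qij by simp
    have pd: "i\<in>{1..n}" "\<forall>k\<in>{1..n}. g' k = g' i \<longrightarrow> i \<le> k" using pairsD[OF pp] by auto
    have qd: "i'\<in>{1..n}" "\<forall>k\<in>{1..n}. g' k = g' i' \<longrightarrow> i' \<le> k" using pairsD[OF qq] by auto
    have jj: "j = j'" using e pij qij unfolding \<phi>_def by simp
    have "i = i'"
    proof (cases "g' i = F"; cases "g' i' = F")
      assume a1: "g' i = F" and a2: "g' i' = F"
      have "i \<le> i'" using pd(2) qd(1) a1 a2 by simp
      moreover have "i' \<le> i" using qd(2) pd(1) a1 a2 by simp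
      ultimately show "i = i'" by simp
    next
      assume a1: "g' i = F" and a2: "g' i' \<noteq> F"
      have "i' = i0" using e pij qij a1 a2 unfolding \<phi>_def by simp
      thus "i = i'" using K[OF qq a2] by simp
    next
      assume a1: "g' i \<noteq> F" and a2: "g' i' = F"
      have "i = i0" using e pij qij a1 a2 unfolding \<phi>_def by simp
      thus "i = i'" using K[OF pp a1] by simp
    next
      assume a1: "g' i \<noteq> F" and a2: "g' i' \<noteq> F"
      thus "i = i'" using e pij qij unfolding \<phi>_def by simp
    qed
    thus "p = q" using pij qij jj by simp
  qed
  have i0y1: "(i0, y1) \<in> pairs n g v" using y1Y i0 first0 unfolding Y_def by (intro pairsI) auto
  have mulp: "mu n g' v < mu n g v"
  proof -
    have "mu n g' v = card (\<phi> ` pairs n g' v)" unfolding mu_pairs using card_image[OF phiinj] by simp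
    also have "\<dots> \<le> card (pairs n g v - {(i0, y1)})"
    proof (rule card_mono)
      show "finite (pairs n g v - {(i0, y1)})" using finite_pairs by simp
      show "\<phi> ` pairs n g' v \<subseteq> pairs n g v - {(i0, y1)}" by (rule image_subsetI) (rule phiA)
    qed
    also have "\<dots> < card (pairs n g v)" by (rule card_Diff1_less[OF finite_pairs i0y1])
    finally show ?thesis unfolding mu_pairs .
  qed
  define R where "R = {x\<in>Sn n. rel n g' v x \<and> \<not> rel n g v x}"
  have RS: "R \<subseteq> Sn n" unfolding R_def by blast
  have relg': "rel n g v x \<Longrightarrow> rel n g' v x" for x by (rule rel_refine[OF ref])
  have Rsat: "y \<in> R" if "x \<in> R" "y \<in> Sn n" "rel n g x y" for x y
  proof -
    have rx: "rel n g' v x" "\<not> rel n g v x" using that(1) unfolding R_def by auto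
    have "rel n g' x y" using rel_refine[OF ref that(3)] .
    hence "rel n g' v y" using rx(1) rel_trans by blast
    moreover have "\<not> rel n g v y"
    proof
      assume "rel n g v y"
      hence "rel n g v x" using that(3) rel_sym rel_trans by blast
      thus False using rx(2) by simp
    qed
    ultimately show ?thesis using that(2) unfolding R_def by blast
  qed
  have Rmu: "mu n g x < mu n g v" if xR: "x \<in> R" for x
  proof -
    have xS: "x \<in> Sn n" and rx: "rel n g' v x" and nrx: "\<not> rel n g v x" using xR unfolding R_def by auto
    have sub: "pairs n g x \<subseteq> pairs n g v"
    proof
      fix p assume p: "p \<in> pairs n g x"
      obtain i j where pij: "p = (i,j)" by (cases p)
      have pd: "i\<in>{1..n}" "j\<in>{1..n}" "g j = g i" "x j < x i" "\<forall>k\<in>{1..n}. g k = g i \<longrightarrow> i \<le> k"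
        using pairsD[of i j n g x] p pij by auto
      have "v j < v i"
      proof (cases "g i = g i0")
        case False
        have "i \<notin> Y" "j \<notin> Y" using False pd(3) unfolding Y_def by auto
        hence "g' j = g' i" using g'nF pd(1,2,3) by metis
        thus ?thesis using rx pd(1,2,4) unfolding rel_def by blast
      next
        case True
        have "i \<le> i0" using pd(5) i0 True by simp
        moreover have "i0 \<le> i" using first0 pd(1) True by simp
        ultimately have ii: "i = i0" by simp
        show ?thesis
        proof (cases "j \<in> Y")
          case True thus ?thesis using ii unfolding Y_def by simp
        next
          case False
          have "g' j = g j" using g'nF[OF pd(2) False] .
          moreover have "g' i0 = g i0" using g'nF[OF i0 i0Y] .
          ultimately have "g' j = g' i0" using pd(3) ii by simp
          thus ?thesis using rx pd(2,4) i0 ii unfolding rel_def by blast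
        qed
      qed
      thus "p \<in> pairs n g v" using pd pij by (auto intro: pairsI)
    qed
    have "\<exists>j\<in>Y. \<not> x j < x i0"
    proof (rule ccontr)
      assume "\<not> (\<exists>j\<in>Y. \<not> x j < x i0)"
      hence allY: "\<forall>j\<in>Y. x j < x i0" by blast
      have "rel n g v x"
      proof (rule rel_imp[OF v xS])
        fix a b assume a: "a\<in>{1..n}" and b: "b\<in>{1..n}" and gab: "g a = g b" and vab: "v a < v b"
        have viaR: "x a < x b" if "g' a = g' b" using rx a b that vab unfolding rel_def by blast
        show "x a < x b"
        proof (cases "a \<in> Y"; cases "b \<in> Y")
          assume "a \<in> Y" "b \<in> Y" thus ?thesis using viaR g'F a b by metis
        next
          assume aY: "a \<in> Y" and bY: "b \<notin> Y"
          have xa: "x a < x i0" using allY aY by blast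
          have gb: "g b = g i0" using aY gab unfolding Y_def by simp
          have vb: "v i0 \<le> v b" using bY b gb unfolding Y_def by auto
          show ?thesis
          proof (cases "b = i0")
            case True thus ?thesis using xa by simp
          next
            case False
            hence "v i0 \<noteq> v b" using Sn_inj[OF v] by (metis injD)
            hence vlt: "v i0 < v b" using vb by simp
            have "g' b = g' i0" using g'nF[OF b bY] g'nF[OF i0 i0Y] gb by simp
            hence "x i0 < x b" using rx i0 b vlt unfolding rel_def by metis
            thus ?thesis using xa by simp
          qed
        next
          assume aY: "a \<notin> Y" and bY: "b \<in> Y"
          have ga: "g a = g i0" using bY gab unfolding Y_def by simp
          have "\<not> v a < v i0" using aY a ga unfolding Y_def by simp
          moreover have "v b < v i0" using bY unfolding Y_def by simp
          ultimately show ?thesis using vab by simp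
        next
          assume "a \<notin> Y" "b \<notin> Y"
          thus ?thesis using viaR g'nF a b gab by metis
        qed
      qed
      thus False using nrx by simp
    qed
    then obtain j where jY: "j \<in> Y" and nx: "\<not> x j < x i0" by blast
    have "(i0, j) \<in> pairs n g v" using jY i0 first0 unfolding Y_def by (intro pairsI) auto
    moreover have "(i0, j) \<notin> pairs n g x" using nx pairsD by blast
    ultimately have "pairs n g x \<subset> pairs n g v" using sub by blast
    thus ?thesis unfolding mu_pairs by (rule psubset_card_mono[OF finite_pairs])
  qed
  have Seq: "(Sg n g v x :: 'k) = Sg n g' v x - (if x \<in> R then 1 else 0)" for x
  proof (cases "x \<in> Sn n")
    case True
    show ?thesis
    proof (cases "rel n g v x")
      case True
      thus ?thesis using relg' \<open>x \<in> Sn n\<close> unfolding Sg_def R_def by simp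
    next
      case False
      thus ?thesis using \<open>x \<in> Sn n\<close> unfolding Sg_def R_def by simp
    qed
  next
    case False thus ?thesis unfolding Sg_def R_def by simp
  qed
  show ?thesis
    using nbg' mulp RS Rmu Rsat Seq by (intro exI[of _ g'] conjI exI[of _ R]) auto
qed

lemma lemmaL_aux:
  fixes g :: "nat \<Rightarrow> nat"
  shows "mu n g v = M \<Longrightarrow> v \<in> Sn n \<Longrightarrow> spanP n (nb n g) (Sg n g v :: (nat \<Rightarrow> nat) \<Rightarrow> 'k::comm_ring_1)"
proof (induction M arbitrary: g v rule: less_induct)
  case (less M)
  show ?case
  proof (cases "pairs n g v = {}")
    case True
    hence "mu n g v = 0" unfolding mu_pairs by simp
    then obtain u where u: "u \<in> Sn n" "(lrm_basis n u :: (nat \<Rightarrow> nat) \<Rightarrow> 'k) = Sg n g v" "nb n g \<le> card (LRM n u)"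
      using base_case[OF less.prems(2)] by blast
    have "spanP n (nb n g) (lrm_basis n u :: (nat \<Rightarrow> nat) \<Rightarrow> 'k)" by (rule spanP_basis[OF u(1) u(3)])
    thus ?thesis using u(2) by simp
  next
    case False
    obtain g' R where st: "nb n g < nb n g'" "mu n g' v < mu n g v" "R \<subseteq> Sn n"
      "\<forall>x\<in>R. mu n g x < mu n g v" "\<forall>x y. x \<in> R \<longrightarrow> y \<in> Sn n \<longrightarrow> rel n g x y \<longrightarrow> y \<in> R"
      "\<forall>x. (Sg n g v x :: 'k) = Sg n g' v x - (if x \<in> R then 1 else 0)"
      using step_case[OF less.prems(2) False] by blast
    have s1: "spanP n (nb n g') (Sg n g' v :: (nat \<Rightarrow> nat) \<Rightarrow> 'k)"
      using less.IH[of "mu n g' v" g' v] st(2) less.prems by simp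
    hence s1': "spanP n (nb n g) (Sg n g' v :: (nat \<Rightarrow> nat) \<Rightarrow> 'k)" using st(1) spanP_mono by (metis less_imp_le)
    have s2: "spanP n (nb n g) (\<lambda>x. if x \<in> R then (1::'k) else 0)"
    proof (rule sat_span[OF st(3)])
      fix x assume x: "x \<in> R"
      show "spanP n (nb n g) (Sg n g x :: (nat \<Rightarrow> nat) \<Rightarrow> 'k)"
        using less.IH[of "mu n g x" g x] st(4) x st(3) less.prems(1) by blast
    next
      fix x y assume "x \<in> R" "y \<in> Sn n" "rel n g x y" thus "y \<in> R" using st(5) by blast
    qed
    have "(Sg n g v :: (nat \<Rightarrow> nat) \<Rightarrow> 'k) = (\<lambda>x. Sg n g' v x - (if x \<in> R then 1 else 0))"
      using st(6) by blast
    thus ?thesis using spanP_diff[OF s1' s2] by simp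
  qed
qed

lemma lemmaL:
  fixes g :: "nat \<Rightarrow> nat"
  assumes "v \<in> Sn n"
  shows "spanP n (nb n g) (Sg n g v :: (nat \<Rightarrow> nat) \<Rightarrow> 'k::comm_ring_1)"
  using lemmaL_aux[OF refl assms] .

definition key :: "nat \<Rightarrow> (nat \<Rightarrow> nat) \<Rightarrow> nat list" where
  "key n x = map x [1..<Suc n]"

lemma list_less_mid: "(xs @ a # ys :: nat list) < xs @ b # zs" if "a < b"
  using that by (induction xs) auto

lemma key_inj: "x \<in> Sn n \<Longrightarrow> w \<in> Sn n \<Longrightarrow> key n x = key n w \<Longrightarrow> x = w"
proof -
  assume x: "x \<in> Sn n" and w: "w \<in> Sn n" and e: "key n x = key n w"
  show "x = w"
  proof
    fix i show "x i = w i"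
    proof (cases "i \<in> {1..n}")
      case True
      have H: "\<forall>k\<in>set [1..<Suc n]. x k = w k" using e unfolding key_def map_eq_conv .
      have "i \<in> set [1..<Suc n]" using True by (simp only: set_upt atLeastLessThan_iff atLeastAtMost_iff) simp
      thus ?thesis using H by blast
    next
      case False thus ?thesis using Sn_out[OF x] Sn_out[OF w] by simp
    qed
  qed
qed

lemma key_less:
  assumes p: "p \<in> {1..n}" and agree: "\<And>i. 1 \<le> i \<Longrightarrow> i < p \<Longrightarrow> x i = w i" and lt: "x p < w p"
  shows "key n x < key n w"
proof -
  have sp: "[1..<Suc n] = [1..<p] @ p # [Suc p..<Suc n]"
  proof -
    have "[1..<Suc n] = [1..<p] @ [p..<Suc n]" using upt_add_eq_append[of 1 p "Suc n - p"] p by simp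
    also have "[p..<Suc n] = p # [Suc p..<Suc n]" using p by (simp add: upt_conv_Cons)
    finally show ?thesis .
  qed
  have "\<forall>k\<in>set [1..<p]. x k = w k" using agree by simp
  hence m: "map x [1..<p] = map w [1..<p]" unfolding map_eq_conv .
  have "key n x = map x [1..<p] @ x p # map x [Suc p..<Suc n]" unfolding key_def sp by simp
  moreover have "key n w = map x [1..<p] @ w p # map w [Suc p..<Suc n]" unfolding key_def sp m by simp
  ultimately show ?thesis using list_less_mid[OF lt] by simp
qed

lemma prefix_min_LRM:
  assumes w: "w \<in> Sn n" and i: "i \<in> {1..n}"
  shows "Min (w ` {1..i}) \<in> LRM n w \<and> inv w (Min (w ` {1..i})) \<le> i"
proof -
  define m where "m = Min (w ` {1..i})"
  have ne: "w ` {1..i} \<noteq> {}" using i by auto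
  have mi: "m \<in> w ` {1..i}" unfolding m_def using Min_in[OF _ ne] by simp
  then obtain q where q: "q \<in> {1..i}" "w q = m" by blast
  have iq: "inv w m = q" using q Sn_inv_app[OF w] by metis
  have qn: "q \<in> {1..n}" using q i by auto
  have "m \<in> {1..n}" using Sn_range[OF w qn] q by simp
  moreover have "w k > m" if k: "1 \<le> k \<and> k < inv w m" for k
  proof -
    have "k \<in> {1..i}" using k iq q by simp
    hence "m \<le> w k" unfolding m_def by simp
    moreover have "w k \<noteq> m" using k iq q Sn_inj[OF w] by (metis injD less_irrefl)
    ultimately show ?thesis by simp
  qed
  ultimately have "m \<in> LRM n w" unfolding LRM_def by blast
  thus ?thesis using iq q m_def by simp
qed

lemma lex_tri:
  assumes w: "w \<in> Sn n" and x: "x \<in> Sn n" and r: "rel n (\<lambda>i. blkI (LRM' n w) (w i)) w x" and ne: "x \<noteq> w"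
  shows "key n x < key n w"
proof -
  let ?g = "\<lambda>i. blkI (LRM' n w) (w i)"
  have "\<exists>p. x p \<noteq> w p" using ne by auto
  then obtain p0 where "x p0 \<noteq> w p0" by blast
  hence ex: "p0 \<in> {1..n}" using Sn_out[OF x] Sn_out[OF w] by fastforce
  define D where "D = {p\<in>{1..n}. x p \<noteq> w p}"
  have finD: "finite D" unfolding D_def by simp
  have neD: "D \<noteq> {}" using ex \<open>x p0 \<noteq> w p0\<close> unfolding D_def by blast
  define p where "p = Min D"
  have pD: "p \<in> D" unfolding p_def using Min_in[OF finD neD] .
  have pn: "p \<in> {1..n}" and xpw: "x p \<noteq> w p" using pD unfolding D_def by auto
  have agree: "x i = w i" if "1 \<le> i" "i < p" for i
  proof (rule ccontr)
    assume "x i \<noteq> w i"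
    hence "i \<in> D" using that pn unfolding D_def by simp
    hence "p \<le> i" unfolding p_def using Min_le[OF finD] by simp
    thus False using that by simp
  qed
  have xinj: "inj x" using Sn_inj[OF x] .
  have winj: "inj w" using Sn_inj[OF w] .
  have "\<not> x p > w p"
  proof
    assume gt: "x p > w p"
    define G where "G = {i\<in>{p..n}. w p < w i}"
    have pG: "p \<notin> G" unfolding G_def by simp
    have Gn: "G \<subseteq> {1..n}" using pn unfolding G_def by auto
    have big: "x i > w p" if iG: "i \<in> insert p G" for i
    proof (cases "i = p")
      case True thus ?thesis using gt by simp
    next
      case False
      hence iG': "i \<in> G" using iG by simp
      hence ipn: "i \<in> {p..n}" and wlt: "w p < w i" unfolding G_def by auto
      hence inn: "i \<in> {1..n}" using pn by auto
      show ?thesis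
      proof (cases "?g i = ?g p")
        case True
        hence "x p < x i" using r pn inn wlt unfolding rel_def by metis
        thus ?thesis using gt by simp
      next
        case False
        have wpn: "w p \<in> {1..n}" using Sn_range[OF w pn] .
        have wi_n: "w i \<in> {1..n}" using Sn_range[OF w inn] .
        have "\<exists>l\<in>LRM n w. w p < l \<and> l \<le> w i"
          using blk_LRM_eq[of "w p" "w i" n w] wpn wlt False by auto
        then obtain l0 where l0: "l0 \<in> LRM n w" "w p < l0" "l0 \<le> w i" by blast
        define S where "S = {l\<in>LRM n w. l \<le> w i}"
        have finS: "finite S" unfolding S_def using finite_LRM by simp
        have l0S: "l0 \<in> S" using l0 unfolding S_def by simp
        define l' where "l' = Max S"
        have l'S: "l' \<in> S" unfolding l'_def using Max_in[OF finS] l0S by blast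
        have l'ge: "l0 \<le> l'" unfolding l'_def using Max_ge[OF finS l0S] .
        have l'L: "l' \<in> LRM n w" and l'le: "l' \<le> w i" using l'S unfolding S_def by auto
        have l'gt: "w p < l'" using l0 l'ge by simp
        have l'n: "l' \<in> {1..n}" using l'L LRM_sub by blast
        define q where "q = inv w l'"
        have qn: "q \<in> {1..n}" unfolding q_def using Sn_range[OF Sn_inv[OF w] l'n] .
        have wq: "w q = l'" unfolding q_def using Sn_inv_app[OF w] by simp
        have qp: "q < p"
        proof (rule ccontr)
          assume "\<not> q < p"
          moreover have "q \<noteq> p" using wq l'gt by auto
          ultimately have "p < q" by simp
          hence "w p > l'" using l'L pn unfolding LRM_def q_def by auto
          thus False using l'gt by simp
        qed
        have xq: "x q = l'" using agree[of q] qn qp wq by simp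
        have nol: "\<not> (\<exists>l\<in>LRM n w. l' < l \<and> l \<le> w i)"
        proof
          assume "\<exists>l\<in>LRM n w. l' < l \<and> l \<le> w i"
          then obtain l where "l \<in> LRM n w" "l' < l" "l \<le> w i" by blast
          hence "l \<in> S" unfolding S_def by simp
          hence "l \<le> l'" unfolding l'_def using Max_ge[OF finS] by simp
          thus False using \<open>l' < l\<close> by simp
        qed
        have gq: "?g q = ?g i" using blk_LRM_eq[of l' "w i" n w] l'n l'le nol wq by simp
        have "q \<noteq> i" using qp ipn by simp
        hence "w q \<noteq> w i" using winj by (meson injD)
        hence "w q < w i" using wq l'le by simp
        hence "x q < x i" using r qn inn gq unfolding rel_def by metis
        thus ?thesis using xq l'gt by simp
      qed
    qed
    have xs: "x ` {p..n} = w ` {p..n}"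
    proof -
      have a: "x ` {1..<p} = w ` {1..<p}" using agree by (intro image_cong) auto
      have sp: "{p..n} = {1..n} - {1..<p}" using pn by auto
      have "x ` {p..n} = x ` {1..n} - x ` {1..<p}" unfolding sp by (rule image_set_diff[OF xinj])
      also have "\<dots> = w ` {1..n} - w ` {1..<p}"
        using a permutes_image[OF Sn_perm[OF x]] permutes_image[OF Sn_perm[OF w]] by simp
      also have "\<dots> = w ` {p..n}" unfolding sp by (rule image_set_diff[OF winj, symmetric])
      finally show ?thesis .
    qed
    have sub: "x ` insert p G \<subseteq> w ` G"
    proof
      fix c assume "c \<in> x ` insert p G"
      then obtain i where i: "i \<in> insert p G" "c = x i" by blast
      have "i \<in> {p..n}" using i(1) pn unfolding G_def by auto
      hence "c \<in> w ` {p..n}" using xs i(2) by blast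
      then obtain k where k: "k \<in> {p..n}" "c = w k" by blast
      have "w p < w k" using big[OF i(1)] i(2) k(2) by simp
      hence "k \<in> G" using k(1) unfolding G_def by simp
      thus "c \<in> w ` G" using k(2) by blast
    qed
    have finG: "finite G" unfolding G_def by simp
    have "x p \<notin> x ` G" using pG xinj by (metis imageE injD)
    hence "card (x ` insert p G) = card (x ` G) + 1" using finG by simp
    moreover have "card (x ` G) = card G" using card_image[OF inj_on_subset[OF xinj subset_UNIV]] by simp
    ultimately have "card (x ` insert p G) = card G + 1" by simp
    moreover have "card (w ` G) = card G" using card_image[OF inj_on_subset[OF winj subset_UNIV]] by simp
    moreover have "card (x ` insert p G) \<le> card (w ` G)" using card_mono[OF _ sub] finG by simp
    ultimately show False by simp
  qed
  hence "x p < w p" using xpw by simp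
  thus ?thesis using key_less[OF pn agree] by simp
qed

lemma T_diag: "w \<in> Sn n \<Longrightarrow> (lrm_basis n w w :: 'k::comm_ring_1) = 1"
proof -
  assume w: "w \<in> Sn n"
  have "(lrm_basis n w :: (nat \<Rightarrow> nat) \<Rightarrow> 'k) = Sg n (\<lambda>i. blkI (LRM' n w) (w i)) w" by (rule lrm_basis_Sg[OF w])
  thus ?thesis using w rel_refl unfolding Sg_def by simp
qed

lemma T_out: "x \<notin> Sn n \<Longrightarrow> (lrm_basis n w x :: 'k::comm_ring_1) = 0"
  unfolding lrm_basis_def gmult_eq by simp

lemma T_tri:
  assumes "w \<in> Sn n" "x \<in> Sn n" "(lrm_basis n w x :: 'k::comm_ring_1) \<noteq> 0" "x \<noteq> w"
  shows "key n x < key n w"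
proof -
  have "rel n (\<lambda>i. blkI (LRM' n w) (w i)) w x"
    using assms(3) unfolding lrm_basis_Sg[OF assms(1)] Sg_def by (auto split: if_splits)
  thus ?thesis using lex_tri assms by blast
qed

lemma argmax_key:
  assumes "finite S" "S \<noteq> {}"
  shows "\<exists>m\<in>S. \<forall>s\<in>S. key n s \<le> key n m"
proof -
  have fin: "finite (key n ` S)" using assms(1) by simp
  have ne: "key n ` S \<noteq> {}" using assms(2) by simp
  obtain m where m: "m \<in> S" "key n m = Max (key n ` S)" using Max_in[OF fin ne] by (metis imageE)
  have "\<forall>s\<in>S. key n s \<le> key n m"
  proof
    fix s assume "s \<in> S"
    hence "key n s \<in> key n ` S" by simp
    thus "key n s \<le> key n m" using Max_ge[OF fin] m(2) by simp
  qed
  thus ?thesis using m(1) by blast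
qed

lemma basis_exists:
  fixes X :: "(nat \<Rightarrow> nat) \<Rightarrow> 'k::comm_ring_1"
  assumes "\<forall>u. u \<notin> Sn n \<longrightarrow> X u = 0"
  shows "\<exists>c. X = (\<lambda>v. \<Sum>w\<in>Sn n. c w * lrm_basis n w v)"
  using assms
proof (induction "card {t\<in>Sn n. \<exists>s\<in>Sn n. X s \<noteq> 0 \<and> key n t \<le> key n s}" arbitrary: X rule: less_induct)
  case less
  define Sp where "Sp = {s\<in>Sn n. X s \<noteq> 0}"
  have finSp: "finite Sp" unfolding Sp_def using finite_Sn by simp
  show ?case
  proof (cases "Sp = {}")
    case True
    have "X = (\<lambda>v. \<Sum>w\<in>Sn n. 0 * lrm_basis n w v)"
    proof
      fix v show "X v = (\<Sum>w\<in>Sn n. 0 * lrm_basis n w v)"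
        using True less.prems unfolding Sp_def by (cases "v \<in> Sn n") auto
    qed
    thus ?thesis by (intro exI[of _ "\<lambda>_. 0"])
  next
    case False
    obtain m where mS: "m \<in> Sp" and mmax: "\<forall>s\<in>Sp. key n s \<le> key n m"
      using argmax_key[OF finSp False] by blast
    have mSn: "m \<in> Sn n" using mS unfolding Sp_def by simp
    define X' where "X' v = X v - X m * lrm_basis n m v" for v
    have X'out: "\<forall>u. u \<notin> Sn n \<longrightarrow> X' u = 0" using less.prems T_out[where 'k='k] unfolding X'_def by simp
    have X'm: "X' m = 0" unfolding X'_def using T_diag[OF mSn, where 'k='k] by simp
    have X'supp: "key n v < key n m" if v: "v \<in> Sn n" "X' v \<noteq> 0" for v
    proof -
      have vm: "v \<noteq> m" using X'm v by auto
      show ?thesis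
      proof (cases "X v = 0")
        case True
        hence "(lrm_basis n m v :: 'k) \<noteq> 0" using v(2) unfolding X'_def by auto
        thus ?thesis using T_tri[OF mSn v(1) _ vm] by blast
      next
        case False
        hence "key n v \<le> key n m" using mmax v(1) unfolding Sp_def by blast
        moreover have "key n v \<noteq> key n m" using key_inj[OF v(1) mSn] vm by blast
        ultimately show ?thesis by simp
      qed
    qed
    let ?D = "\<lambda>X::(nat \<Rightarrow> nat) \<Rightarrow> 'k. {t\<in>Sn n. \<exists>s\<in>Sn n. X s \<noteq> 0 \<and> key n t \<le> key n s}"
    have sub: "?D X' \<subseteq> ?D X - {m}"
    proof
      fix t assume "t \<in> ?D X'"
      then obtain s where t: "t \<in> Sn n" "s \<in> Sn n" "X' s \<noteq> 0" "key n t \<le> key n s" by blast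
      have "key n t < key n m" using X'supp[OF t(2,3)] t(4) by simp
      moreover have "X m \<noteq> 0" using mS unfolding Sp_def by simp
      ultimately show "t \<in> ?D X - {m}" using t(1) mSn by auto
    qed
    have mD: "m \<in> ?D X" using mS mSn unfolding Sp_def by auto
    have finD: "finite (?D X)" using finite_Sn by simp
    have "card (?D X') < card (?D X)"
    proof -
      have "card (?D X') \<le> card (?D X - {m})" by (rule card_mono[OF _ sub]) (use finD in simp)
      also have "\<dots> < card (?D X)" by (rule card_Diff1_less[OF finD mD])
      finally show ?thesis .
    qed
    then obtain c where c: "X' = (\<lambda>v. \<Sum>w\<in>Sn n. c w * lrm_basis n w v)"
      using less.hyps[OF _ X'out] by blast
    define c' where "c' w = c w + (if w = m then X m else 0)" for w
    have "X = (\<lambda>v. \<Sum>w\<in>Sn n. c' w * lrm_basis n w v)"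
    proof
      fix v
      have "(\<Sum>w\<in>Sn n. c' w * lrm_basis n w v) = (\<Sum>w\<in>Sn n. c w * lrm_basis n w v) + (\<Sum>w\<in>Sn n. (if w = m then X m else 0) * lrm_basis n w v)"
        unfolding c'_def by (simp add: distrib_right sum.distrib)
      also have "(\<Sum>w\<in>Sn n. (if w = m then X m else 0) * lrm_basis n w v) = X m * lrm_basis n m v"
      proof -
        have "(\<Sum>w\<in>Sn n. (if w = m then X m else 0) * lrm_basis n w v) = (\<Sum>w\<in>Sn n. if w = m then X m * lrm_basis n w v else 0)"
          by (rule sum.cong) auto
        also have "\<dots> = X m * lrm_basis n m v" using mSn finite_Sn by (simp add: sum.delta)
        finally show ?thesis .
      qed
      also have "(\<Sum>w\<in>Sn n. c w * lrm_basis n w v) = X' v" using c by simp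
      finally show "X v = (\<Sum>w\<in>Sn n. c' w * lrm_basis n w v)" unfolding X'_def by simp
    qed
    thus ?thesis by blast
  qed
qed

lemma basis_unique:
  fixes e :: "(nat \<Rightarrow> nat) \<Rightarrow> 'k::comm_ring_1"
  assumes z: "\<And>v. (\<Sum>w\<in>Sn n. e w * lrm_basis n w v) = 0"
  shows "\<forall>w\<in>Sn n. e w = 0"
proof (rule ccontr)
  assume "\<not> (\<forall>w\<in>Sn n. e w = 0)"
  hence ne: "{w\<in>Sn n. e w \<noteq> 0} \<noteq> {}" by blast
  have fin: "finite {w\<in>Sn n. e w \<noteq> 0}" using finite_Sn by simp
  obtain m where m: "m \<in> {w\<in>Sn n. e w \<noteq> 0}" and mm: "\<forall>s\<in>{w\<in>Sn n. e w \<noteq> 0}. key n s \<le> key n m"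
    using argmax_key[OF fin ne] by blast
  have mSn: "m \<in> Sn n" and em: "e m \<noteq> 0" using m by auto
  have "(\<Sum>w\<in>Sn n. e w * lrm_basis n w m) = (\<Sum>w\<in>Sn n. if w = m then e m else 0)"
  proof (rule sum.cong[OF refl])
    fix w assume w: "w \<in> Sn n"
    show "e w * lrm_basis n w m = (if w = m then e m else 0)"
    proof (cases "w = m")
      case True thus ?thesis using T_diag[OF mSn, where 'k='k] by simp
    next
      case False
      show ?thesis
      proof (cases "e w = 0")
        case True thus ?thesis using False by simp
      next
        case ew: False
        have "key n w \<le> key n m" using mm w ew by blast
        moreover have "key n w \<noteq> key n m" using key_inj[OF w mSn] False by blast
        ultimately have kl: "key n w < key n m" by simp
        have "(lrm_basis n w m :: 'k) = 0"
        proof (rule ccontr)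
          assume "(lrm_basis n w m :: 'k) \<noteq> 0"
          hence "key n m < key n w" using T_tri[OF w mSn] False by metis
          thus False using kl by simp
        qed
        thus ?thesis using False by simp
      qed
    qed
  qed
  also have "\<dots> = e m" using mSn finite_Sn by (simp add: sum.delta)
  finally show False using z[of m] em by simp
qed

lemma gmult_lin:
  fixes lam :: "nat list \<Rightarrow> 'k::comm_ring_1" and Y :: "(nat \<Rightarrow> nat) \<Rightarrow> 'k"
  shows "gmult n (\<lambda>u. \<Sum>\<alpha>\<in>A. lam \<alpha> * B_comp n \<alpha> u) Y = (\<lambda>x. \<Sum>\<alpha>\<in>A. lam \<alpha> * gmult n (B_comp n \<alpha>) Y x)"
proof
  fix x
  show "gmult n (\<lambda>u. \<Sum>\<alpha>\<in>A. lam \<alpha> * B_comp n \<alpha> u) Y x = (\<Sum>\<alpha>\<in>A. lam \<alpha> * gmult n (B_comp n \<alpha>) Y x)"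
  proof (cases "x \<in> Sn n")
    case True
    have "gmult n (\<lambda>u. \<Sum>\<alpha>\<in>A. lam \<alpha> * B_comp n \<alpha> u) Y x
        = (\<Sum>y\<in>Sn n. (\<Sum>\<alpha>\<in>A. lam \<alpha> * B_comp n \<alpha> (x \<circ> inv y)) * Y y)"
      using True by (simp add: gmult_eq)
    also have "\<dots> = (\<Sum>y\<in>Sn n. \<Sum>\<alpha>\<in>A. lam \<alpha> * (B_comp n \<alpha> (x \<circ> inv y) * Y y))"
      by (simp add: sum_distrib_right mult.assoc)
    also have "\<dots> = (\<Sum>\<alpha>\<in>A. \<Sum>y\<in>Sn n. lam \<alpha> * (B_comp n \<alpha> (x \<circ> inv y) * Y y))"
      by (rule sum.swap)
    also have "\<dots> = (\<Sum>\<alpha>\<in>A. lam \<alpha> * gmult n (B_comp n \<alpha>) Y x)"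
      using True by (simp add: gmult_eq sum_distrib_left)
    finally show ?thesis .
  next
    case False thus ?thesis by (simp add: gmult_eq)
  qed
qed

lemma one_term:
  assumes w: "w \<in> Sn n" and a: "\<alpha> \<in> Comp n"
  shows "\<exists>R. spanP n (card (LRM n w) + 1) R \<and>
     (gmult n (B_comp n \<alpha>) (lrm_basis n w) :: (nat \<Rightarrow> nat) \<Rightarrow> 'k::comm_ring_1)
       = (\<lambda>x. of_nat (eta (cLRM' n w) \<alpha>) * lrm_basis n w x + R x)"
proof -
  define g where "g i = blkI (LRM' n w) (w i)" for i
  have T: "(lrm_basis n w :: (nat \<Rightarrow> nat) \<Rightarrow> 'k) = Sg n g w" unfolding g_def by (rule lrm_basis_Sg[OF w])
  define R where "R x = (\<Sum>z\<in>Zset n \<alpha> g w - Z0 n \<alpha> g w. (Sg n (\<lambda>i. prod_encode (g i, z i)) w x :: 'k))" for x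
  have sR: "spanP n (card (LRM n w) + 1) R"
    unfolding R_def
  proof (rule spanP_sum)
    fix z assume z: "z \<in> Zset n \<alpha> g w - Z0 n \<alpha> g w"
    have "spanP n (nb n (\<lambda>i. prod_encode (g i, z i))) (Sg n (\<lambda>i. prod_encode (g i, z i)) w :: (nat \<Rightarrow> nat) \<Rightarrow> 'k)"
      by (rule lemmaL[OF w])
    moreover have "card (LRM n w) + 1 \<le> nb n (\<lambda>i. prod_encode (g i, z i))"
      using nb_rest[OF z] nb_lrm[OF w] unfolding g_def by simp
    ultimately show "spanP n (card (LRM n w) + 1) (Sg n (\<lambda>i. prod_encode (g i, z i)) w :: (nat \<Rightarrow> nat) \<Rightarrow> 'k)"
      by (rule spanP_mono)
  qed
  have ce: "card (Z0 n \<alpha> g w) = eta (cLRM' n w) \<alpha>" unfolding g_def by (rule eta_count[OF w a])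
  have "(gmult n (B_comp n \<alpha>) (lrm_basis n w) :: (nat \<Rightarrow> nat) \<Rightarrow> 'k)
       = (\<lambda>x. of_nat (eta (cLRM' n w) \<alpha>) * lrm_basis n w x + R x)"
    unfolding T prod_decomp[OF a] R_def ce by (rule refl)
  thus ?thesis using sR by blast
qed

definition ordr :: "nat \<Rightarrow> ((nat \<Rightarrow> nat) \<times> (nat \<Rightarrow> nat)) set" where
  "ordr n = {(u, w). u \<in> Sn n \<and> w \<in> Sn n \<and> (card (LRM n w) < card (LRM n u) \<or> (card (LRM n u) = card (LRM n w) \<and> key n u \<le> key n w))}"

lemma ordr_linear: "linear_order_on (Sn n) (ordr n)"
  unfolding linear_order_on_def partial_order_on_def preorder_on_def
proof (intro conjI)
  show "refl_on (Sn n) (ordr n)" unfolding refl_on_def ordr_def by auto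
  show "ordr n \<subseteq> Sn n \<times> Sn n" unfolding ordr_def by auto
  show "trans (ordr n)" unfolding trans_def ordr_def by auto
  show "antisym (ordr n)"
    unfolding antisym_def ordr_def using key_inj by fastforce
  show "total_on (Sn n) (ordr n)"
    unfolding total_on_def ordr_def by auto
qed

theorem corollary3p9:
  fixes n :: nat and lam :: "nat list \<Rightarrow> 'k::comm_ring_1" and a :: "(nat \<Rightarrow> nat) \<Rightarrow> 'k"
  defines "a \<equiv> (\<lambda>u. \<Sum>\<alpha>\<in>Comp n. lam \<alpha> * B_comp n \<alpha> u)"
  shows "(\<forall>x :: (nat \<Rightarrow> nat) \<Rightarrow> 'k. (\<forall>u. u \<notin> Sn n \<longrightarrow> x u = 0) \<longrightarrow>
            (\<exists>!c. (\<forall>u. u \<notin> Sn n \<longrightarrow> c u = 0) \<and>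
                  x = (\<lambda>v. \<Sum>w\<in>Sn n. c w * lrm_basis n w v)))
       \<and> (\<exists>r. linear_order_on (Sn n) r \<and>
            (\<forall>w\<in>Sn n. \<exists>c :: (nat \<Rightarrow> nat) \<Rightarrow> 'k.
                gmult n a (lrm_basis n w) = (\<lambda>v. \<Sum>u\<in>Sn n. c u * lrm_basis n u v)
              \<and> (\<forall>u\<in>Sn n. c u \<noteq> 0 \<longrightarrow> (u, w) \<in> r)
              \<and> c w = (\<Sum>\<alpha>\<in>Comp n. lam \<alpha> * of_nat (eta (cLRM' n w) \<alpha>))))"
proof (intro conjI)
  show "\<forall>x :: (nat \<Rightarrow> nat) \<Rightarrow> 'k. (\<forall>u. u \<notin> Sn n \<longrightarrow> x u = 0) \<longrightarrow>
            (\<exists>!c. (\<forall>u. u \<notin> Sn n \<longrightarrow> c u = 0) \<and>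
                  x = (\<lambda>v. \<Sum>w\<in>Sn n. c w * lrm_basis n w v))"
  proof (intro allI impI)
    fix x :: "(nat \<Rightarrow> nat) \<Rightarrow> 'k"
    assume hx: "\<forall>u. u \<notin> Sn n \<longrightarrow> x u = 0"
    obtain c where c: "x = (\<lambda>v. \<Sum>w\<in>Sn n. c w * lrm_basis n w v)" using basis_exists[OF hx] by blast
    define c' where "c' u = (if u \<in> Sn n then c u else 0)" for u
    have c'1: "\<forall>u. u \<notin> Sn n \<longrightarrow> c' u = 0" unfolding c'_def by simp
    have c'2: "x = (\<lambda>v. \<Sum>w\<in>Sn n. c' w * lrm_basis n w v)"
      unfolding c by (intro ext sum.cong) (auto simp: c'_def)
    show "\<exists>!c. (\<forall>u. u \<notin> Sn n \<longrightarrow> c u = 0) \<and> x = (\<lambda>v. \<Sum>w\<in>Sn n. c w * lrm_basis n w v)"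
    proof (rule ex1I[of _ c'])
      show "(\<forall>u. u \<notin> Sn n \<longrightarrow> c' u = 0) \<and> x = (\<lambda>v. \<Sum>w\<in>Sn n. c' w * lrm_basis n w v)"
        using c'1 c'2 by blast
    next
      fix d assume d: "(\<forall>u. u \<notin> Sn n \<longrightarrow> d u = 0) \<and> x = (\<lambda>v. \<Sum>w\<in>Sn n. d w * lrm_basis n w v)"
      have z: "(\<Sum>w\<in>Sn n. (d w - c' w) * lrm_basis n w v) = 0" for v
      proof -
        have "(\<Sum>w\<in>Sn n. (d w - c' w) * lrm_basis n w v) = (\<Sum>w\<in>Sn n. d w * lrm_basis n w v) - (\<Sum>w\<in>Sn n. c' w * lrm_basis n w v)"
          by (simp add: left_diff_distrib sum_subtractf)
        also have "\<dots> = x v - x v" using d c'2 by metis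
        finally show ?thesis by simp
      qed
      have "\<forall>w\<in>Sn n. d w - c' w = 0" by (rule basis_unique[OF z])
      thus "d = c'" using d c'1 by (intro ext) (metis eq_iff_diff_eq_0)
    qed
  qed
next
  show "\<exists>r. linear_order_on (Sn n) r \<and>
            (\<forall>w\<in>Sn n. \<exists>c :: (nat \<Rightarrow> nat) \<Rightarrow> 'k.
                gmult n a (lrm_basis n w) = (\<lambda>v. \<Sum>u\<in>Sn n. c u * lrm_basis n u v)
              \<and> (\<forall>u\<in>Sn n. c u \<noteq> 0 \<longrightarrow> (u, w) \<in> r)
              \<and> c w = (\<Sum>\<alpha>\<in>Comp n. lam \<alpha> * of_nat (eta (cLRM' n w) \<alpha>)))"
  proof (intro exI[of _ "ordr n"] conjI ballI)
    show "linear_order_on (Sn n) (ordr n)" by (rule ordr_linear)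
  next
    fix w assume w: "w \<in> Sn n"
    define e where "e = (\<Sum>\<alpha>\<in>Comp n. lam \<alpha> * (of_nat (eta (cLRM' n w) \<alpha>) :: 'k))"
    have "\<forall>\<alpha>\<in>Comp n. \<exists>R. spanP n (card (LRM n w) + 1) R \<and>
       (gmult n (B_comp n \<alpha>) (lrm_basis n w) :: (nat \<Rightarrow> nat) \<Rightarrow> 'k)
         = (\<lambda>x. of_nat (eta (cLRM' n w) \<alpha>) * lrm_basis n w x + R x)"
      using one_term[OF w] by blast
    then obtain RR where RR: "\<And>\<alpha>. \<alpha> \<in> Comp n \<Longrightarrow> spanP n (card (LRM n w) + 1) (RR \<alpha>)"
      "\<And>\<alpha>. \<alpha> \<in> Comp n \<Longrightarrow> (gmult n (B_comp n \<alpha>) (lrm_basis n w) :: (nat \<Rightarrow> nat) \<Rightarrow> 'k)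
         = (\<lambda>x. of_nat (eta (cLRM' n w) \<alpha>) * lrm_basis n w x + RR \<alpha> x)"
      by metis
    have sp: "spanP n (card (LRM n w) + 1) (\<lambda>x. \<Sum>\<alpha>\<in>Comp n. lam \<alpha> * RR \<alpha> x)"
      by (rule spanP_sum) (rule spanP_scale[OF RR(1)])
    then obtain d where d: "(\<lambda>x. \<Sum>\<alpha>\<in>Comp n. lam \<alpha> * RR \<alpha> x) = (\<lambda>v. \<Sum>u\<in>Sn n. d u * lrm_basis n u v)"
      "\<forall>u\<in>Sn n. d u \<noteq> 0 \<longrightarrow> card (LRM n w) + 1 \<le> card (LRM n u)"
      unfolding spanP_def by blast
    have gm: "gmult n a (lrm_basis n w) = (\<lambda>x. e * lrm_basis n w x + (\<Sum>\<alpha>\<in>Comp n. lam \<alpha> * RR \<alpha> x))"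
    proof
      fix x
      have "gmult n a (lrm_basis n w) x = (\<Sum>\<alpha>\<in>Comp n. lam \<alpha> * gmult n (B_comp n \<alpha>) (lrm_basis n w) x)"
        unfolding a_def gmult_lin by (rule refl)
      also have "\<dots> = (\<Sum>\<alpha>\<in>Comp n. lam \<alpha> * (of_nat (eta (cLRM' n w) \<alpha>) * lrm_basis n w x + RR \<alpha> x))"
        by (rule sum.cong[OF refl]) (simp add: RR(2))
      also have "\<dots> = e * lrm_basis n w x + (\<Sum>\<alpha>\<in>Comp n. lam \<alpha> * RR \<alpha> x)"
        unfolding e_def by (simp add: distrib_left sum.distrib sum_distrib_right mult.assoc)
      finally show "gmult n a (lrm_basis n w) x = e * lrm_basis n w x + (\<Sum>\<alpha>\<in>Comp n. lam \<alpha> * RR \<alpha> x)" .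
    qed
    define c where "c u = d u + (if u = w then e else 0)" for u
    have dw: "d w = 0" using d(2) w by fastforce
    show "\<exists>c :: (nat \<Rightarrow> nat) \<Rightarrow> 'k.
                gmult n a (lrm_basis n w) = (\<lambda>v. \<Sum>u\<in>Sn n. c u * lrm_basis n u v)
              \<and> (\<forall>u\<in>Sn n. c u \<noteq> 0 \<longrightarrow> (u, w) \<in> ordr n)
              \<and> c w = (\<Sum>\<alpha>\<in>Comp n. lam \<alpha> * of_nat (eta (cLRM' n w) \<alpha>))"
    proof (intro exI[of _ c] conjI)
      show "gmult n a (lrm_basis n w) = (\<lambda>v. \<Sum>u\<in>Sn n. c u * lrm_basis n u v)"
      proof
        fix v
        have "(\<Sum>u\<in>Sn n. c u * lrm_basis n u v) = (\<Sum>u\<in>Sn n. d u * lrm_basis n u v) + (\<Sum>u\<in>Sn n. (if u = w then e else 0) * lrm_basis n u v)"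
          unfolding c_def by (simp add: distrib_right sum.distrib)
        also have "(\<Sum>u\<in>Sn n. (if u = w then e else 0) * lrm_basis n u v) = e * lrm_basis n w v"
        proof -
          have "(\<Sum>u\<in>Sn n. (if u = w then e else 0) * lrm_basis n u v) = (\<Sum>u\<in>Sn n. if u = w then e * lrm_basis n u v else 0)"
            by (rule sum.cong) auto
          also have "\<dots> = e * lrm_basis n w v" using w finite_Sn by (simp add: sum.delta)
          finally show ?thesis .
        qed
        also have "(\<Sum>u\<in>Sn n. d u * lrm_basis n u v) = (\<Sum>\<alpha>\<in>Comp n. lam \<alpha> * RR \<alpha> v)"
          using d(1) by metis
        finally show "gmult n a (lrm_basis n w) v = (\<Sum>u\<in>Sn n. c u * lrm_basis n u v)"
          unfolding gm by simp
      qed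
    next
      show "\<forall>u\<in>Sn n. c u \<noteq> 0 \<longrightarrow> (u, w) \<in> ordr n"
      proof (intro ballI impI)
        fix u assume u: "u \<in> Sn n" and cu: "c u \<noteq> 0"
        show "(u, w) \<in> ordr n"
        proof (cases "u = w")
          case True thus ?thesis using w unfolding ordr_def by simp
        next
          case False
          hence "d u \<noteq> 0" using cu unfolding c_def by simp
          hence "card (LRM n w) < card (LRM n u)" using d(2) u by fastforce
          thus ?thesis using u w unfolding ordr_def by simp
        qed
      qed
    next
      show "c w = (\<Sum>\<alpha>\<in>Comp n. lam \<alpha> * of_nat (eta (cLRM' n w) \<alpha>))"
        unfolding c_def e_def using dw by simp
    qed
  qed
qed

end
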